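(* Let $a(z)$ be a complex function that is differentially transcendental over $\mathcal{C}=\mathbf{C}(z)$. Let $f(z,u_0,u_1,\ldots,u_m,y_1,\ldots,y_n)$ be a rational expression over $\mathcal{L}$, i.e. a rational function in the variables $u_0,\ldots,u_m,y_1,\ldots,y_n$ with coefficients in $\mathcal{L}$. Let $e_1,\ldots,e_m$ be entire functions which are differentially algebraic over $\mathcal{C}$ and satisfy $e_i'\not\equiv 0$ for $1\le i\le m$. If $b$ is a function meromorphic on $\mathbf{C}$ such that $$f(z,b,b\circ e_1,\ldots,b\circ e_m,Db,\ldots,D^nb)\equiv a(z),$$ then $b$ is differentially transcendental over $\mathcal{C}$.
   Context: $D=d/dz$. $\mathcal{C}=\mathbf{C}(z)$ is the differential field of complex rational functions, and $\mathcal{M}$ is the differential field of complex functions meromorphic on $\mathbf{C}$. A function $h\in\mathcal{M}$ (or more generally a complex function) is differentially algebraic over $\mathcal{C}$ if there exist $n\in\mathbf{N}$ and a nonzero polynomial $p\in\mathcal{C}[u_0,\ldots,u_n]$ with $p(h,Dh,\ldots,D^nh)\equiv0$; otherwise it is differentially transcendental over $\mathcal{C}$. $\mathcal{L}=\{h\in\mathcal{M}: h \text{ is differentially algebraic over } \mathcal{C}\}$, which is a differential subfield of $\mathcal{M}$ containing $\mathcal{C}$. *)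

theory Defs
  imports "HOL-Complex_Analysis.Complex_Analysis" "HOL-Computational_Algebra.Polynomial"
begin

text \<open>A polynomial in the
  variables x_0, ..., x_(N-1) is given by its coefficient map c, sending an exponent
  vector (a function nat to nat, vanishing from N on) to a coefficient, here a complex
  function of z.\<close>

definition fpoly :: "nat \<Rightarrow> ((nat \<Rightarrow> nat) \<Rightarrow> (complex \<Rightarrow> complex)) \<Rightarrow> bool" where
  "fpoly N c \<longleftrightarrow> finite {\<alpha>. c \<alpha> \<noteq> (\<lambda>_. 0)} \<and>
     (\<forall>\<alpha>. c \<alpha> \<noteq> (\<lambda>_. 0) \<longrightarrow> (\<forall>i\<ge>N. \<alpha> i = 0))"

definition fpoly_eval ::
  "nat \<Rightarrow> ((nat \<Rightarrow> nat) \<Rightarrow> (complex \<Rightarrow> complex)) \<Rightarrow> (nat \<Rightarrow> complex) \<Rightarrow> complex \<Rightarrow> complex" where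
  "fpoly_eval N c X z = (\<Sum>\<alpha>\<in>{\<alpha>. c \<alpha> \<noteq> (\<lambda>_. 0)}. c \<alpha> z * (\<Prod>i<N. X i ^ \<alpha> i))"

definition rat_fun :: "(complex \<Rightarrow> complex) \<Rightarrow> bool" where
  "rat_fun g \<longleftrightarrow> (\<exists>p q. q \<noteq> 0 \<and> (\<forall>z. g z = poly p z / poly q z))"

text \<open>Differential algebraicity over C(z): some nonzero polynomial
  p in C(z)[u_0,...,u_n] annihilates (h, Dh, ..., D^n h); identities between
  (meromorphic) functions are understood off a discrete set.\<close>
definition diff_alg :: "(complex \<Rightarrow> complex) \<Rightarrow> bool" where
  "diff_alg h \<longleftrightarrow> (\<exists>n c. fpoly (Suc n) c \<and> (\<forall>\<alpha>. rat_fun (c \<alpha>)) \<and>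
      (\<exists>\<alpha>. c \<alpha> \<noteq> (\<lambda>_. 0)) \<and>
      (\<forall>\<^sub>\<approx>z. fpoly_eval (Suc n) c (\<lambda>i. (deriv ^^ i) h z) z = 0))"

definition diff_trans :: "(complex \<Rightarrow> complex) \<Rightarrow> bool" where
  "diff_trans h \<longleftrightarrow> \<not> diff_alg h"

definition L_field :: "(complex \<Rightarrow> complex) set" where
  "L_field = {h. h meromorphic_on UNIV \<and> diff_alg h}"

end

theory Submission
  imports Defs "HOL-Library.Function_Algebras"
begin
lemma ae_iff: "(\<forall>\<^sub>\<approx>z::complex. P z) \<longleftrightarrow> (\<forall>x. eventually P (at x))"
  by (simp add: eventually_cosparse_open_eq)

lemma ae_nhds:
  assumes "\<forall>\<^sub>\<approx>z::complex. P z"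
  shows "\<forall>\<^sub>\<approx>z. eventually P (nhds z)"
  unfolding ae_iff
proof
  fix x
  have "eventually P (at x)" using assms ae_iff by blast
  then obtain S where S: "open S" "x \<in> S" "\<And>y. y \<in> S \<Longrightarrow> y \<noteq> x \<Longrightarrow> P y"
    unfolding eventually_at_topological by blast
  have "eventually (\<lambda>y. y \<in> S - {x}) (at x)"
    using S(1,2) by (simp add: eventually_at_topological) (metis S(1))
  thus "eventually (\<lambda>y. eventually P (nhds y)) (at x)"
  proof eventually_elim
    case (elim y)
    have "open (S - {x})" using S(1) by (simp add: open_Diff)
    hence "eventually (\<lambda>w. w \<in> S - {x}) (nhds y)" using elim by (intro eventually_nhds_in_open)
    thus ?case by eventually_elim (use S in auto)
  qed
qed

lemma ae_not_bot: "\<not> (\<forall>\<^sub>\<approx>z::complex. False)"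
  by (simp add: trivial_limit_def[symmetric])

lemma ae_finite: "finite (X::complex set) \<Longrightarrow> \<forall>\<^sub>\<approx>z. z \<notin> X"
  by (simp add: eventually_cosparse finite_imp_sparse)

inductive_set Pg :: "(complex \<Rightarrow> complex) set \<Rightarrow> (complex \<Rightarrow> complex) set" for G where
  Pg_const: "(\<lambda>z. c) \<in> Pg G"
| Pg_id: "(\<lambda>z. z) \<in> Pg G"
| Pg_gen: "g \<in> G \<Longrightarrow> g \<in> Pg G"
| Pg_add: "f \<in> Pg G \<Longrightarrow> h \<in> Pg G \<Longrightarrow> (\<lambda>z. f z + h z) \<in> Pg G"
| Pg_mult: "f \<in> Pg G \<Longrightarrow> h \<in> Pg G \<Longrightarrow> (\<lambda>z. f z * h z) \<in> Pg G"

lemma Pg_uminus: "f \<in> Pg G \<Longrightarrow> (\<lambda>z. - f z) \<in> Pg G"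
  using Pg_mult[OF Pg_const[of "-1"]] by simp

lemma Pg_diff: "f \<in> Pg G \<Longrightarrow> h \<in> Pg G \<Longrightarrow> (\<lambda>z. f z - h z) \<in> Pg G"
  using Pg_add[OF _ Pg_uminus[of h]] by simp

lemma Pg_sum: "(\<And>i. i \<in> I \<Longrightarrow> f i \<in> Pg G) \<Longrightarrow> (\<lambda>z. \<Sum>i\<in>I. f i z) \<in> Pg G"
proof (induction I rule: infinite_finite_induct)
  case (infinite I) thus ?case using Pg_const[of 0] by simp
next
  case empty thus ?case using Pg_const[of 0] by simp
next
  case (insert i I) thus ?case using Pg_add[of "f i" G "\<lambda>z. \<Sum>i\<in>I. f i z"] by simp
qed

lemma Pg_prod: "(\<And>i. i \<in> I \<Longrightarrow> f i \<in> Pg G) \<Longrightarrow> (\<lambda>z. \<Prod>i\<in>I. f i z) \<in> Pg G"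
proof (induction I rule: infinite_finite_induct)
  case (infinite I) thus ?case using Pg_const[of 1] by simp
next
  case empty thus ?case using Pg_const[of 1] by simp
next
  case (insert i I) thus ?case using Pg_mult[of "f i" G "\<lambda>z. \<Prod>i\<in>I. f i z"] by simp
qed

lemma Pg_power: "f \<in> Pg G \<Longrightarrow> (\<lambda>z. f z ^ n) \<in> Pg G"
  using Pg_prod[of "{..<n}" "\<lambda>_. f" G] by simp

lemma Pg_mono: "f \<in> Pg G \<Longrightarrow> G \<subseteq> G' \<Longrightarrow> f \<in> Pg G'"
  by (induction rule: Pg.induct) (auto intro: Pg.intros)

lemma Pg_poly: "(\<lambda>z. poly p z) \<in> Pg G"
proof (induction p)
  case 0 thus ?case using Pg_const[of 0] by simp
next
  case (pCons a p)
  thus ?case using Pg_add[OF Pg_const[of a] Pg_mult[OF Pg_id pCons(2)]] by simp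
qed

definition mero_set :: "(complex \<Rightarrow> complex) set \<Rightarrow> bool" where
  "mero_set G \<longleftrightarrow> (\<forall>g\<in>G. g meromorphic_on UNIV)"

lemma Pg_mero: "f \<in> Pg G \<Longrightarrow> mero_set G \<Longrightarrow> f meromorphic_on UNIV"
  by (induction rule: Pg.induct) (auto simp: mero_set_def intro!: meromorphic_intros)

lemma mero_dichotomy:
  assumes "f meromorphic_on UNIV"
  shows "(\<forall>\<^sub>\<approx>z. f z = 0) \<or> (\<forall>\<^sub>\<approx>z. f z \<noteq> 0)"
  using meromorphic_imp_constant_or_avoid[OF assms] by auto

definition Rf :: "(complex \<Rightarrow> complex) set \<Rightarrow> (complex \<Rightarrow> complex) set" where
  "Rf G = {x. \<exists>A B. A \<in> Pg G \<and> B \<in> Pg G \<and> (\<forall>\<^sub>\<approx>z. B z \<noteq> 0) \<and> (\<forall>\<^sub>\<approx>z. x z = A z / B z)}"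

lemma RfI: "A \<in> Pg G \<Longrightarrow> B \<in> Pg G \<Longrightarrow> (\<forall>\<^sub>\<approx>z. B z \<noteq> 0) \<Longrightarrow> (\<forall>\<^sub>\<approx>z. x z = A z / B z) \<Longrightarrow> x \<in> Rf G"
  unfolding Rf_def by blast

lemma RfE: assumes "x \<in> Rf G"
  obtains A B where "A \<in> Pg G" "B \<in> Pg G" "\<forall>\<^sub>\<approx>z. B z \<noteq> 0" "\<forall>\<^sub>\<approx>z. x z = A z / B z"
  using assms unfolding Rf_def by blast

lemma Rf_Pg: "f \<in> Pg G \<Longrightarrow> f \<in> Rf G"
  by (rule RfI[of f G "\<lambda>_. 1"]) (auto intro: Pg_const)

lemma Rf_const: "(\<lambda>z. c) \<in> Rf G"
  by (rule Rf_Pg) (rule Pg_const)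

lemma Rf_id: "(\<lambda>z. z) \<in> Rf G"
  by (rule Rf_Pg) (rule Pg_id)

lemma Rf_gen: "g \<in> G \<Longrightarrow> g \<in> Rf G"
  by (rule Rf_Pg) (rule Pg_gen)

lemma Rf_cong: "x \<in> Rf G \<Longrightarrow> (\<forall>\<^sub>\<approx>z. x z = y z) \<Longrightarrow> y \<in> Rf G"
proof -
  assume x: "x \<in> Rf G" and e: "\<forall>\<^sub>\<approx>z. x z = y z"
  from x obtain A B where AB: "A \<in> Pg G" "B \<in> Pg G" "\<forall>\<^sub>\<approx>z. B z \<noteq> 0" "\<forall>\<^sub>\<approx>z. x z = A z / B z"
    by (rule RfE)
  have "\<forall>\<^sub>\<approx>z. y z = A z / B z" using AB(4) e by eventually_elim auto
  thus ?thesis using AB by (intro RfI) auto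
qed

lemma Rf_mono: "x \<in> Rf G \<Longrightarrow> G \<subseteq> G' \<Longrightarrow> x \<in> Rf G'"
  unfolding Rf_def using Pg_mono by blast

lemma Rf_add: "x \<in> Rf G \<Longrightarrow> y \<in> Rf G \<Longrightarrow> (\<lambda>z. x z + y z) \<in> Rf G"
proof -
  assume x: "x \<in> Rf G" and y: "y \<in> Rf G"
  from x obtain A B where AB: "A \<in> Pg G" "B \<in> Pg G" "\<forall>\<^sub>\<approx>z. B z \<noteq> 0" "\<forall>\<^sub>\<approx>z. x z = A z / B z"
    by (rule RfE)
  from y obtain C D where CD: "C \<in> Pg G" "D \<in> Pg G" "\<forall>\<^sub>\<approx>z. D z \<noteq> 0" "\<forall>\<^sub>\<approx>z. y z = C z / D z"
    by (rule RfE)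
  show ?thesis
  proof (rule RfI[of "\<lambda>z. A z * D z + C z * B z" _ "\<lambda>z. B z * D z"])
    show "(\<lambda>z. A z * D z + C z * B z) \<in> Pg G" using AB CD by (intro Pg_add Pg_mult)
    show "(\<lambda>z. B z * D z) \<in> Pg G" using AB CD by (intro Pg_mult)
    show "\<forall>\<^sub>\<approx>z. B z * D z \<noteq> 0" using AB(3) CD(3) by eventually_elim auto
    show "\<forall>\<^sub>\<approx>z. x z + y z = (A z * D z + C z * B z) / (B z * D z)"
      using AB(3,4) CD(3,4) by eventually_elim (simp add: field_simps)
  qed
qed

lemma Rf_mult: "x \<in> Rf G \<Longrightarrow> y \<in> Rf G \<Longrightarrow> (\<lambda>z. x z * y z) \<in> Rf G"
proof -
  assume x: "x \<in> Rf G" and y: "y \<in> Rf G"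
  from x obtain A B where AB: "A \<in> Pg G" "B \<in> Pg G" "\<forall>\<^sub>\<approx>z. B z \<noteq> 0" "\<forall>\<^sub>\<approx>z. x z = A z / B z"
    by (rule RfE)
  from y obtain C D where CD: "C \<in> Pg G" "D \<in> Pg G" "\<forall>\<^sub>\<approx>z. D z \<noteq> 0" "\<forall>\<^sub>\<approx>z. y z = C z / D z"
    by (rule RfE)
  show ?thesis
  proof (rule RfI[of "\<lambda>z. A z * C z" _ "\<lambda>z. B z * D z"])
    show "(\<lambda>z. A z * C z) \<in> Pg G" using AB CD by (intro Pg_mult)
    show "(\<lambda>z. B z * D z) \<in> Pg G" using AB CD by (intro Pg_mult)
    show "\<forall>\<^sub>\<approx>z. B z * D z \<noteq> 0" using AB(3) CD(3) by eventually_elim auto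
    show "\<forall>\<^sub>\<approx>z. x z * y z = (A z * C z) / (B z * D z)"
      using AB(3,4) CD(3,4) by eventually_elim (simp add: field_simps)
  qed
qed

lemma Rf_uminus: "x \<in> Rf G \<Longrightarrow> (\<lambda>z. - x z) \<in> Rf G"
  using Rf_mult[OF Rf_const[of "-1"]] by simp

lemma Rf_diff: "x \<in> Rf G \<Longrightarrow> y \<in> Rf G \<Longrightarrow> (\<lambda>z. x z - y z) \<in> Rf G"
  using Rf_add[OF _ Rf_uminus[of y]] by simp

lemma Rf_sum: "(\<And>i. i \<in> I \<Longrightarrow> f i \<in> Rf G) \<Longrightarrow> (\<lambda>z. \<Sum>i\<in>I. f i z) \<in> Rf G"
proof (induction I rule: infinite_finite_induct)
  case (infinite I) thus ?case using Rf_const[of 0] by simp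
next
  case empty thus ?case using Rf_const[of 0] by simp
next
  case (insert i I) thus ?case using Rf_add[of "f i" G "\<lambda>z. \<Sum>i\<in>I. f i z"] by simp
qed

lemma Rf_prod: "(\<And>i. i \<in> I \<Longrightarrow> f i \<in> Rf G) \<Longrightarrow> (\<lambda>z. \<Prod>i\<in>I. f i z) \<in> Rf G"
proof (induction I rule: infinite_finite_induct)
  case (infinite I) thus ?case using Rf_const[of 1] by simp
next
  case empty thus ?case using Rf_const[of 1] by simp
next
  case (insert i I) thus ?case using Rf_mult[of "f i" G "\<lambda>z. \<Prod>i\<in>I. f i z"] by simp
qed

lemma Rf_power: "f \<in> Rf G \<Longrightarrow> (\<lambda>z. f z ^ n) \<in> Rf G"
  using Rf_prod[of "{..<n}" "\<lambda>_. f" G] by simp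

lemma Rf_inverse:
  assumes x: "x \<in> Rf G" and G: "mero_set G"
  shows "(\<lambda>z. inverse (x z)) \<in> Rf G"
proof -
  from x obtain A B where AB: "A \<in> Pg G" "B \<in> Pg G" "\<forall>\<^sub>\<approx>z. B z \<noteq> 0" "\<forall>\<^sub>\<approx>z. x z = A z / B z"
    by (rule RfE)
  have "A meromorphic_on UNIV" using AB(1) G by (rule Pg_mero)
  from mero_dichotomy[OF this] show ?thesis
  proof
    assume A0: "\<forall>\<^sub>\<approx>z. A z = 0"
    show ?thesis
    proof (rule Rf_cong[OF Rf_const[of 0]])
      show "\<forall>\<^sub>\<approx>z. 0 = inverse (x z)" using A0 AB(4) by eventually_elim auto
    qed
  next
    assume A0: "\<forall>\<^sub>\<approx>z. A z \<noteq> 0"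
    show ?thesis
    proof (rule RfI[OF AB(2) AB(1) A0])
      show "\<forall>\<^sub>\<approx>z. inverse (x z) = B z / A z" using A0 AB(3,4) by eventually_elim auto
    qed
  qed
qed

lemma Rf_divide: "x \<in> Rf G \<Longrightarrow> y \<in> Rf G \<Longrightarrow> mero_set G \<Longrightarrow> (\<lambda>z. x z / y z) \<in> Rf G"
  using Rf_mult[OF _ Rf_inverse[of y]] by (simp add: divide_inverse)

lemma Rf_rat_fun: "rat_fun f \<Longrightarrow> f \<in> Rf G"
proof -
  assume "rat_fun f"
  then obtain p q where pq: "q \<noteq> 0" "\<And>z. f z = poly p z / poly q z" unfolding rat_fun_def by blast
  have "finite {z. poly q z = 0}" using pq(1) by (rule poly_roots_finite)
  hence "\<forall>\<^sub>\<approx>z. z \<notin> {z. poly q z = 0}" by (rule ae_finite)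
  hence "\<forall>\<^sub>\<approx>z. poly q z \<noteq> 0" by simp
  thus ?thesis by (rule RfI[OF Pg_poly[of p] Pg_poly[of q]]) (use pq in auto)
qed

lemma rat_fun_mero: "rat_fun f \<Longrightarrow> f meromorphic_on UNIV"
proof -
  assume "rat_fun f"
  then obtain p q where pq: "q \<noteq> 0" "\<And>z. f z = poly p z / poly q z" unfolding rat_fun_def by blast
  have "(\<lambda>z. poly p z / poly q z) meromorphic_on UNIV"
    using Pg_mero[OF Pg_poly[of p], of "{}"] Pg_mero[OF Pg_poly[of q], of "{}"]
    by (intro meromorphic_intros) (auto simp: mero_set_def)
  moreover have "f = (\<lambda>z. poly p z / poly q z)" using pq by auto
  ultimately show ?thesis by simp
qed

definition good :: "(complex \<Rightarrow> complex) set \<Rightarrow> bool" where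
  "good G \<longleftrightarrow> finite G \<and> mero_set G \<and> (\<forall>g\<in>G. deriv g \<in> Rf G)"

lemma mero_ae_deriv:
  assumes "g meromorphic_on UNIV"
  shows "\<forall>\<^sub>\<approx>z. (g has_field_derivative deriv g z) (at z)"
proof -
  have "\<forall>\<^sub>\<approx>z. g analytic_on {z}" using assms by (rule meromorphic_on_imp_analytic_cosparse)
  thus ?thesis
    by eventually_elim (simp add: DERIV_deriv_iff_field_differentiable analytic_on_imp_differentiable_at)
qed

lemma Pg_deriv:
  assumes G: "mero_set G" "\<forall>g\<in>G. deriv g \<in> Rf G"
  shows "f \<in> Pg G \<Longrightarrow> \<exists>y\<in>Rf G. \<forall>\<^sub>\<approx>z. (f has_field_derivative y z) (at z)"
proof (induction rule: Pg.induct)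
  case (Pg_const c)
  show ?case by (rule bexI[OF _ Rf_const[of 0]]) auto
next
  case Pg_id
  show ?case by (rule bexI[OF _ Rf_const[of 1]]) auto
next
  case (Pg_gen g)
  show ?case
    by (rule bexI[of _ "deriv g"]) (use G Pg_gen mero_ae_deriv in \<open>auto simp: mero_set_def\<close>)
next
  case (Pg_add f h)
  then obtain y1 y2 where y: "y1 \<in> Rf G" "y2 \<in> Rf G"
    "\<forall>\<^sub>\<approx>z. (f has_field_derivative y1 z) (at z)" "\<forall>\<^sub>\<approx>z. (h has_field_derivative y2 z) (at z)"
    by blast
  show ?case
  proof (rule bexI[OF _ Rf_add[OF y(1,2)]])
    show "\<forall>\<^sub>\<approx>z. ((\<lambda>z. f z + h z) has_field_derivative y1 z + y2 z) (at z)"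
      using y(3,4) by eventually_elim (auto intro!: derivative_eq_intros)
  qed
next
  case (Pg_mult f h)
  then obtain y1 y2 where y: "y1 \<in> Rf G" "y2 \<in> Rf G"
    "\<forall>\<^sub>\<approx>z. (f has_field_derivative y1 z) (at z)" "\<forall>\<^sub>\<approx>z. (h has_field_derivative y2 z) (at z)"
    by blast
  have fh: "f \<in> Rf G" "h \<in> Rf G" using Pg_mult Rf_Pg by auto
  show ?case
  proof (rule bexI[OF _ Rf_add[OF Rf_mult[OF y(1) fh(2)] Rf_mult[OF fh(1) y(2)]]])
    show "\<forall>\<^sub>\<approx>z. ((\<lambda>z. f z * h z) has_field_derivative y1 z * h z + f z * y2 z) (at z)"
      using y(3,4) by eventually_elim (auto intro!: derivative_eq_intros)
  qed
qed

lemma Rf_has_deriv: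
  assumes G: "mero_set G" "\<forall>g\<in>G. deriv g \<in> Rf G" and x: "x \<in> Rf G"
  shows "\<exists>y\<in>Rf G. \<forall>\<^sub>\<approx>z. (x has_field_derivative y z) (at z)"
proof -
  from x obtain A B where AB: "A \<in> Pg G" "B \<in> Pg G" "\<forall>\<^sub>\<approx>z. B z \<noteq> 0" "\<forall>\<^sub>\<approx>z. x z = A z / B z"
    by (rule RfE)
  obtain a where a: "a \<in> Rf G" "\<forall>\<^sub>\<approx>z. (A has_field_derivative a z) (at z)"
    using Pg_deriv[OF G AB(1)] by blast
  obtain b where b: "b \<in> Rf G" "\<forall>\<^sub>\<approx>z. (B has_field_derivative b z) (at z)"
    using Pg_deriv[OF G AB(2)] by blast
  have AR: "A \<in> Rf G" "B \<in> Rf G" using AB Rf_Pg by auto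
  have yR: "(\<lambda>z. (a z * B z - A z * b z) / (B z)^2) \<in> Rf G"
    by (intro Rf_divide Rf_diff Rf_mult Rf_power a b AR G)
  have ev: "\<forall>\<^sub>\<approx>z. eventually (\<lambda>w. x w = A w / B w) (nhds z)" using AB(4) by (rule ae_nhds)
  show ?thesis
  proof (rule bexI[OF _ yR])
    show "\<forall>\<^sub>\<approx>z. (x has_field_derivative (a z * B z - A z * b z) / (B z)^2) (at z)"
      using ev a(2) b(2) AB(3)
    proof eventually_elim
      case (elim z)
      have "((\<lambda>w. A w / B w) has_field_derivative (a z * B z - A z * b z) / (B z)^2) (at z)"
        using elim by (auto intro!: derivative_eq_intros simp: power2_eq_square)
      thus ?case by (subst DERIV_cong_ev[OF refl elim(1) refl])
    qed
  qed
qed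

lemma Rf_deriv:
  assumes G: "mero_set G" "\<forall>g\<in>G. deriv g \<in> Rf G" and x: "x \<in> Rf G"
  shows "deriv x \<in> Rf G"
proof -
  obtain y where y: "y \<in> Rf G" "\<forall>\<^sub>\<approx>z. (x has_field_derivative y z) (at z)"
    using Rf_has_deriv[OF G x] by blast
  show ?thesis
    by (rule Rf_cong[OF y(1)]) (use y(2) in \<open>eventually_elim, simp add: DERIV_imp_deriv\<close>)
qed

lemma Rf_higher_deriv:
  assumes G: "mero_set G" "\<forall>g\<in>G. deriv g \<in> Rf G" and x: "x \<in> Rf G"
  shows "(deriv ^^ j) x \<in> Rf G"
  by (induction j) (auto intro: Rf_deriv[OF G] x)

lemma good_union:
  assumes "good G1" "good G2" shows "good (G1 \<union> G2)"
  using assms unfolding good_def mero_set_def by (auto intro: Rf_mono)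

lemma good_empty: "good {}"
  by (simp add: good_def mero_set_def)

lemma good_UN:
  assumes "finite I" "\<And>i. i \<in> I \<Longrightarrow> good (G i)" shows "good (\<Union>i\<in>I. G i)"
  using assms by (induction I rule: finite_induct) (auto intro: good_union good_empty)

definition entire_nc :: "(complex \<Rightarrow> complex) \<Rightarrow> bool" where
  "entire_nc e \<longleftrightarrow> e holomorphic_on UNIV \<and> deriv e \<noteq> (\<lambda>_. 0)"

lemma entire_nc_analytic: "entire_nc e \<Longrightarrow> e analytic_on UNIV"
  by (simp add: entire_nc_def analytic_on_open)

lemma entire_nc_avoid:
  assumes "entire_nc e"
  shows "\<forall>\<^sub>\<approx>z. e z \<noteq> c"
proof -
  have "e nicely_meromorphic_on UNIV"
    using entire_nc_analytic[OF assms] by (rule analytic_on_imp_nicely_meromorphic_on)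
  from nicely_meromorphic_imp_constant_or_avoid[OF this, of c]
  have disj: "(\<forall>x. e x = c) \<or> (\<forall>\<^sub>\<approx>x. e x \<noteq> c)" by auto
  have neg: "\<not> (\<forall>x. e x = c)"
  proof
    assume "\<forall>x. e x = c"
    hence "e = (\<lambda>_. c)" by auto
    hence "deriv e = (\<lambda>_. 0)" by simp
    thus False using assms by (simp add: entire_nc_def)
  qed
  from disj neg show ?thesis by simp
qed

lemma ae_compose:
  assumes e: "entire_nc e" and P: "\<forall>\<^sub>\<approx>z. P z"
  shows "\<forall>\<^sub>\<approx>z. P (e z)"
proof -
  have "\<forall>x0. eventually (\<lambda>z. P (e z)) (at x0)"
  proof
    fix x0
    have 1: "eventually P (at (e x0))" using P by (simp add: ae_iff)
    have "isCont e x0"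
      by (rule analytic_at_imp_isCont, rule analytic_on_subset[OF entire_nc_analytic[OF e]]) auto
    hence 2: "filterlim e (nhds (e x0)) (at x0)" by (simp add: isCont_def)
    have 3: "eventually (\<lambda>x. e x \<noteq> e x0) (at x0)"
      using eventually_cosparse_imp_eventually_at[OF entire_nc_avoid[OF e, of "e x0"], of x0 UNIV] by simp
    have "filterlim e (at (e x0)) (at x0)" using 2 3 by (rule filterlim_atI)
    with 1 show "eventually (\<lambda>z. P (e z)) (at x0)" by (rule eventually_compose_filterlim)
  qed
  thus ?thesis by (simp add: ae_iff)
qed

definition compset :: "(complex \<Rightarrow> complex) set \<Rightarrow> (complex \<Rightarrow> complex) \<Rightarrow> (complex \<Rightarrow> complex) set" where
  "compset G e = (\<lambda>g z. g (e z)) ` G \<union> {e}"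

lemma Pg_compose: "f \<in> Pg G \<Longrightarrow> (\<lambda>z. f (e z)) \<in> Pg (compset G e)"
proof (induction rule: Pg.induct)
  case (Pg_const c) thus ?case by (auto intro: Pg.intros)
next
  case Pg_id thus ?case by (auto intro: Pg.intros simp: compset_def)
next
  case (Pg_gen g) thus ?case by (auto intro: Pg.intros simp: compset_def)
next
  case (Pg_add f h) thus ?case using Pg.Pg_add[OF Pg_add.IH(1) Pg_add.IH(2)] by simp
next
  case (Pg_mult f h) thus ?case using Pg.Pg_mult[OF Pg_mult.IH(1) Pg_mult.IH(2)] by simp
qed

lemma Rf_compose:
  assumes e: "entire_nc e" and x: "x \<in> Rf G"
  shows "(\<lambda>z. x (e z)) \<in> Rf (compset G e)"
proof -
  from x obtain A B where AB: "A \<in> Pg G" "B \<in> Pg G" "\<forall>\<^sub>\<approx>z. B z \<noteq> 0" "\<forall>\<^sub>\<approx>z. x z = A z / B z"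
    by (rule RfE)
  show ?thesis
  proof (rule RfI[OF Pg_compose[OF AB(1)] Pg_compose[OF AB(2)]])
    show "\<forall>\<^sub>\<approx>z. B (e z) \<noteq> 0" using ae_compose[OF e AB(3)] .
    show "\<forall>\<^sub>\<approx>z. x (e z) = A (e z) / B (e z)" using ae_compose[OF e AB(4)] .
  qed
qed

lemma good_compose:
  assumes G: "good G" and Ge: "good Ge" and eR: "e \<in> Rf Ge" and e: "entire_nc e"
  shows "good (compset G e \<union> Ge)"
proof -
  let ?G' = "compset G e \<union> Ge"
  have ea: "e analytic_on UNIV" using e by (rule entire_nc_analytic)
  have deR: "deriv e \<in> Rf Ge"
    using Ge eR by (intro Rf_deriv) (auto simp: good_def)
  have deR': "deriv e \<in> Rf ?G'" using deR by (rule Rf_mono) auto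
  have fin: "finite ?G'" using G Ge by (auto simp: good_def compset_def)
  have mero: "mero_set ?G'"
    unfolding mero_set_def
  proof
    fix g assume "g \<in> ?G'"
    then consider (a) g0 where "g0 \<in> G" "g = (\<lambda>z. g0 (e z))" | (b) "g = e" | (c) "g \<in> Ge"
      unfolding compset_def by blast
    thus "g meromorphic_on UNIV"
    proof cases
      case a
      have "g0 meromorphic_on UNIV" using G a(1) by (auto simp: good_def mero_set_def)
      thus ?thesis using meromorphic_on_compose[of g0 UNIV e UNIV] ea a(2) by simp
    next
      case b thus ?thesis using ea by (simp add: analytic_on_imp_meromorphic_on)
    next
      case c thus ?thesis using Ge by (auto simp: good_def mero_set_def)
    qed
  qed
  have dg: "deriv (\<lambda>z. g (e z)) \<in> Rf ?G'" if g: "g \<in> G" for g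
  proof -
    have gm: "g meromorphic_on UNIV" and dgR: "deriv g \<in> Rf G" using G g by (auto simp: good_def mero_set_def)
    have "(\<lambda>z. deriv g (e z)) \<in> Rf (compset G e)" using Rf_compose[OF e dgR] .
    hence R1: "(\<lambda>z. deriv g (e z)) \<in> Rf ?G'" by (rule Rf_mono) auto
    have "\<forall>\<^sub>\<approx>z. g analytic_on {z}" using gm by (rule meromorphic_on_imp_analytic_cosparse)
    hence "\<forall>\<^sub>\<approx>z. g analytic_on {e z}" by (rule ae_compose[OF e])
    hence "\<forall>\<^sub>\<approx>z. deriv g (e z) * deriv e z = deriv (\<lambda>z. g (e z)) z"
    proof eventually_elim
      case (elim z)
      have "DERIV g (e z) :> deriv g (e z)"
        using elim by (simp add: DERIV_deriv_iff_field_differentiable analytic_on_imp_differentiable_at)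
      moreover have "DERIV e z :> deriv e z"
        using ea by (simp add: DERIV_deriv_iff_field_differentiable analytic_on_imp_differentiable_at)
      ultimately have "DERIV (\<lambda>z. g (e z)) z :> deriv g (e z) * deriv e z" by (rule DERIV_chain2)
      thus ?case by (simp add: DERIV_imp_deriv)
    qed
    thus ?thesis by (rule Rf_cong[OF Rf_mult[OF R1 deR']])
  qed
  have "\<forall>g\<in>?G'. deriv g \<in> Rf ?G'"
  proof
    fix g assume "g \<in> ?G'"
    then consider (a) g0 where "g0 \<in> G" "g = (\<lambda>z. g0 (e z))" | (b) "g = e" | (c) "g \<in> Ge"
      unfolding compset_def by blast
    thus "deriv g \<in> Rf ?G'"
    proof cases
      case a thus ?thesis using dg by simp
    next
      case b thus ?thesis using deR' by simp
    next
      case c thus ?thesis using Ge by (auto simp: good_def intro: Rf_mono)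
    qed
  qed
  thus ?thesis using fin mero by (simp add: good_def)
qed

lemma compose_in_good:
  assumes G: "good G" and x: "x \<in> Rf G" and Ge: "good Ge" and eR: "e \<in> Rf Ge" and e: "entire_nc e"
  shows "\<exists>G'. good G' \<and> (\<lambda>z. x (e z)) \<in> Rf G'"
  using good_compose[OF G Ge eR e] Rf_mono[OF Rf_compose[OF e x]] by blast

definition sc :: "nat \<Rightarrow> ((nat \<Rightarrow> nat) \<Rightarrow> complex \<Rightarrow> complex) \<Rightarrow> (nat \<Rightarrow> nat) \<Rightarrow> complex \<Rightarrow> complex" where
  "sc n c = (\<lambda>\<beta> z. of_nat (\<beta> n + 1) * c (\<beta>(n := \<beta> n + 1)) z)"

definition degb :: "nat \<Rightarrow> ((nat \<Rightarrow> nat) \<Rightarrow> complex \<Rightarrow> complex) \<Rightarrow> nat \<Rightarrow> bool" where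
  "degb n c d \<longleftrightarrow> (\<forall>\<alpha>. c \<alpha> \<noteq> (\<lambda>_. 0) \<longrightarrow> \<alpha> n \<le> d)"

lemma sc_nz_iff: "sc n c \<beta> \<noteq> (\<lambda>_. 0) \<longleftrightarrow> c (\<beta>(n := \<beta> n + 1)) \<noteq> (\<lambda>_. 0)"
proof
  assume "sc n c \<beta> \<noteq> (\<lambda>_. 0)" thus "c (\<beta>(n := \<beta> n + 1)) \<noteq> (\<lambda>_. 0)"
    by (auto simp: sc_def)
next
  assume a: "c (\<beta>(n := \<beta> n + 1)) \<noteq> (\<lambda>_. 0)"
  then obtain z where "c (\<beta>(n := \<beta> n + 1)) z \<noteq> 0" by auto
  hence "sc n c \<beta> z \<noteq> 0" unfolding sc_def using of_nat_neq_0[of "\<beta> n", where ?'a=complex] by simp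
  thus "sc n c \<beta> \<noteq> (\<lambda>_. 0)" by auto
qed

lemma fpoly_sc:
  assumes "fpoly N c" "n < N"
  shows "fpoly N (sc n c)"
proof -
  have fin: "finite {\<alpha>. c \<alpha> \<noteq> (\<lambda>_. 0)}" and van: "\<And>\<alpha> i. c \<alpha> \<noteq> (\<lambda>_. 0) \<Longrightarrow> i \<ge> N \<Longrightarrow> \<alpha> i = 0"
    using assms(1) by (auto simp: fpoly_def)
  have "{\<beta>. sc n c \<beta> \<noteq> (\<lambda>_. 0)} \<subseteq> (\<lambda>\<alpha>. \<alpha>(n := \<alpha> n - 1)) ` {\<alpha>. c \<alpha> \<noteq> (\<lambda>_. 0)}"
  proof
    fix \<beta> assume "\<beta> \<in> {\<beta>. sc n c \<beta> \<noteq> (\<lambda>_. 0)}"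
    hence "c (\<beta>(n := \<beta> n + 1)) \<noteq> (\<lambda>_. 0)" by (simp add: sc_nz_iff)
    moreover have "\<beta> = (\<lambda>\<alpha>. \<alpha>(n := \<alpha> n - 1)) (\<beta>(n := \<beta> n + 1))" by auto
    ultimately show "\<beta> \<in> (\<lambda>\<alpha>. \<alpha>(n := \<alpha> n - 1)) ` {\<alpha>. c \<alpha> \<noteq> (\<lambda>_. 0)}" by blast
  qed
  hence "finite {\<beta>. sc n c \<beta> \<noteq> (\<lambda>_. 0)}" using fin finite_surj by blast
  moreover have "\<forall>\<beta>. sc n c \<beta> \<noteq> (\<lambda>_. 0) \<longrightarrow> (\<forall>i\<ge>N. \<beta> i = 0)"
  proof (intro allI impI)
    fix \<beta> i assume "sc n c \<beta> \<noteq> (\<lambda>_. 0)" "i \<ge> N"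
    hence "c (\<beta>(n := \<beta> n + 1)) \<noteq> (\<lambda>_. 0)" by (simp add: sc_nz_iff)
    from van[OF this \<open>i \<ge> N\<close>] show "\<beta> i = 0" using assms(2) \<open>i \<ge> N\<close> by (auto split: if_splits)
  qed
  ultimately show ?thesis by (simp add: fpoly_def)
qed

lemma rat_fun_cmult: "rat_fun f \<Longrightarrow> rat_fun (\<lambda>z. k * f z)"
proof -
  assume "rat_fun f"
  then obtain p q where pq: "q \<noteq> 0" "\<And>z. f z = poly p z / poly q z" unfolding rat_fun_def by blast
  show ?thesis unfolding rat_fun_def
    by (rule exI[of _ "smult k p"], rule exI[of _ q]) (use pq in auto)
qed

lemma rat_fun_sc: "\<forall>\<alpha>. rat_fun (c \<alpha>) \<Longrightarrow> \<forall>\<beta>. rat_fun (sc n c \<beta>)"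
  unfolding sc_def by (auto intro: rat_fun_cmult)

lemma degb_sc: "degb n c (Suc d) \<Longrightarrow> degb n (sc n c) d"
  unfolding degb_def
proof (intro allI impI)
  fix \<beta> assume a: "\<forall>\<alpha>. c \<alpha> \<noteq> (\<lambda>_. 0) \<longrightarrow> \<alpha> n \<le> Suc d" "sc n c \<beta> \<noteq> (\<lambda>_. 0)"
  hence "c (\<beta>(n := \<beta> n + 1)) \<noteq> (\<lambda>_. 0)" by (simp add: sc_nz_iff)
  with a(1) have "(\<beta>(n := \<beta> n + 1)) n \<le> Suc d" by blast
  thus "\<beta> n \<le> d" by simp
qed

lemma sc_nonzero:
  assumes "c \<alpha> \<noteq> (\<lambda>_. 0)" "\<alpha> n \<noteq> 0"
  shows "sc n c (\<alpha>(n := \<alpha> n - 1)) \<noteq> (\<lambda>_. 0)"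
proof -
  have "(\<alpha>(n := \<alpha> n - 1))(n := (\<alpha>(n := \<alpha> n - 1)) n + 1) = \<alpha>" using assms(2) by auto
  thus ?thesis using assms(1) by (simp add: sc_nz_iff)
qed

lemma fpoly_degb: "fpoly N c \<Longrightarrow> \<exists>d. degb n c d"
proof -
  assume "fpoly N c"
  hence fin: "finite {\<alpha>. c \<alpha> \<noteq> (\<lambda>_. 0)}" by (simp add: fpoly_def)
  show ?thesis
    by (rule exI[of _ "Max ((\<lambda>\<alpha>. \<alpha> n) ` {\<alpha>. c \<alpha> \<noteq> (\<lambda>_. 0)})"]) (use fin in \<open>auto simp: degb_def\<close>)
qed

lemma fpoly_eval_sc:
  assumes "fpoly N c" "n < N"
  shows "fpoly_eval N (sc n c) X z =
    (\<Sum>\<alpha>\<in>{\<alpha>. c \<alpha> \<noteq> (\<lambda>_. 0)}. c \<alpha> z * of_nat (\<alpha> n) * X n ^ (\<alpha> n - 1) * (\<Prod>j\<in>{..<N}-{n}. X j ^ \<alpha> j))"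
proof -
  let ?S = "{\<alpha>. c \<alpha> \<noteq> (\<lambda>_. 0)}"
  let ?T = "{\<alpha>. c \<alpha> \<noteq> (\<lambda>_. 0) \<and> \<alpha> n \<noteq> 0}"
  let ?h = "\<lambda>\<alpha>. c \<alpha> z * of_nat (\<alpha> n) * X n ^ (\<alpha> n - 1) * (\<Prod>j\<in>{..<N}-{n}. X j ^ \<alpha> j)"
  have fin: "finite ?S" using assms(1) by (simp add: fpoly_def)
  have "(\<Sum>\<alpha>\<in>?S. ?h \<alpha>) = (\<Sum>\<alpha>\<in>?T. ?h \<alpha>)"
    by (rule sum.mono_neutral_right) (use fin in auto)
  also have "\<dots> = fpoly_eval N (sc n c) X z"
    unfolding fpoly_eval_def
  proof (rule sum.reindex_bij_witness[of _ "\<lambda>\<beta>. \<beta>(n := \<beta> n + 1)" "\<lambda>\<alpha>. \<alpha>(n := \<alpha> n - 1)"])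
    fix \<alpha> assume a: "\<alpha> \<in> ?T"
    show "(\<alpha>(n := \<alpha> n - 1))(n := (\<alpha>(n := \<alpha> n - 1)) n + 1) = \<alpha>" using a by auto
    show "\<alpha>(n := \<alpha> n - 1) \<in> {\<beta>. sc n c \<beta> \<noteq> (\<lambda>_. 0)}" using sc_nonzero[of c \<alpha> n] a by auto
    define \<beta> where "\<beta> = \<alpha>(n := \<alpha> n - 1)"
    have ba: "\<beta>(n := \<beta> n + 1) = \<alpha>" using a by (auto simp: \<beta>_def)
    have bn: "\<beta> n + 1 = \<alpha> n" "\<beta> n = \<alpha> n - 1" using a by (auto simp: \<beta>_def)
    have pr: "(\<Prod>j<N. X j ^ \<beta> j) = X n ^ \<beta> n * (\<Prod>j\<in>{..<N}-{n}. X j ^ \<beta> j)"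
      using assms(2) by (subst prod.remove[of _ n]) auto
    have pr2: "(\<Prod>j\<in>{..<N}-{n}. X j ^ \<beta> j) = (\<Prod>j\<in>{..<N}-{n}. X j ^ \<alpha> j)"
      by (rule prod.cong) (auto simp: \<beta>_def)
    have "sc n c \<beta> z = of_nat (\<alpha> n) * c \<alpha> z" unfolding sc_def by (subst ba, subst bn(1), rule refl)
    hence "sc n c \<beta> z * (\<Prod>i<N. X i ^ \<beta> i) = ?h \<alpha>"
      unfolding pr pr2 bn(2) by (simp add: algebra_simps)
    thus "sc n c (\<alpha>(n := \<alpha> n - 1)) z * (\<Prod>i<N. X i ^ (\<alpha>(n := \<alpha> n - 1)) i) = ?h \<alpha>"
      by (simp add: \<beta>_def)
  next
    fix \<beta> assume b: "\<beta> \<in> {\<beta>. sc n c \<beta> \<noteq> (\<lambda>_. 0)}"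
    hence cb: "c (\<beta>(n := \<beta> n + 1)) \<noteq> (\<lambda>_. 0)" by (simp add: sc_nz_iff)
    show "(\<beta>(n := \<beta> n + 1))(n := (\<beta>(n := \<beta> n + 1)) n - 1) = \<beta>" by auto
    show "\<beta>(n := \<beta> n + 1) \<in> ?T" using cb by auto
  qed
  finally show ?thesis by simp
qed

lemma fpoly_eval_deriv:
  fixes Y :: "nat \<Rightarrow> complex \<Rightarrow> complex"
  assumes fp: "fpoly (Suc n) c"
    and dc: "\<And>\<alpha>. c \<alpha> \<noteq> (\<lambda>_. 0) \<Longrightarrow> (c \<alpha> has_field_derivative dc \<alpha>) (at z)"
    and dY: "\<And>i. i \<le> n \<Longrightarrow> (Y i has_field_derivative Y (Suc i) z) (at z)"
  shows "((\<lambda>w. fpoly_eval (Suc n) c (\<lambda>i. Y i w) w) has_field_derivative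
     (\<Sum>\<alpha>\<in>{\<alpha>. c \<alpha> \<noteq> (\<lambda>_. 0)}. dc \<alpha> * (\<Prod>i<Suc n. Y i z ^ \<alpha> i) + c \<alpha> z *
        (\<Sum>i<n. of_nat (\<alpha> i) * (Y (Suc i) z * Y i z ^ (\<alpha> i - Suc 0)) * (\<Prod>j\<in>{..<Suc n}-{i}. Y j z ^ \<alpha> j)))
     + fpoly_eval (Suc n) (sc n c) (\<lambda>i. Y i z) z * Y (Suc n) z) (at z)"
proof -
  let ?S = "{\<alpha>. c \<alpha> \<noteq> (\<lambda>_. 0)}"
  have fin: "finite ?S" using fp by (simp add: fpoly_def)
  have dP: "((\<lambda>w. \<Prod>i<Suc n. Y i w ^ \<alpha> i) has_field_derivative
      (\<Sum>i<Suc n. of_nat (\<alpha> i) * (Y (Suc i) z * Y i z ^ (\<alpha> i - Suc 0)) * (\<Prod>j\<in>{..<Suc n}-{i}. Y j z ^ \<alpha> j))) (at z)" for \<alpha>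
    by (rule has_field_derivative_prod, rule DERIV_power, rule dY) auto
  have D: "((\<lambda>w. fpoly_eval (Suc n) c (\<lambda>i. Y i w) w) has_field_derivative
     (\<Sum>\<alpha>\<in>?S. dc \<alpha> * (\<Prod>i<Suc n. Y i z ^ \<alpha> i) + c \<alpha> z *
        (\<Sum>i<Suc n. of_nat (\<alpha> i) * (Y (Suc i) z * Y i z ^ (\<alpha> i - Suc 0)) * (\<Prod>j\<in>{..<Suc n}-{i}. Y j z ^ \<alpha> j)))) (at z)"
    unfolding fpoly_eval_def
  proof (rule DERIV_sum[of ?S "\<lambda>w \<alpha>. c \<alpha> w * (\<Prod>i<Suc n. Y i w ^ \<alpha> i)"])
    fix \<alpha> assume "\<alpha> \<in> ?S"
    hence "(c \<alpha> has_field_derivative dc \<alpha>) (at z)" by (intro dc) auto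
    from DERIV_mult[OF this dP[of \<alpha>]] show "((\<lambda>w. c \<alpha> w * (\<Prod>i<Suc n. Y i w ^ \<alpha> i)) has_field_derivative
      dc \<alpha> * (\<Prod>i<Suc n. Y i z ^ \<alpha> i) + c \<alpha> z *
        (\<Sum>i<Suc n. of_nat (\<alpha> i) * (Y (Suc i) z * Y i z ^ (\<alpha> i - Suc 0)) * (\<Prod>j\<in>{..<Suc n}-{i}. Y j z ^ \<alpha> j))) (at z)"
      by (rule DERIV_cong) (simp add: algebra_simps)
  qed
  let ?A = "\<lambda>\<alpha>. dc \<alpha> * (\<Prod>i<Suc n. Y i z ^ \<alpha> i)"
  let ?B = "\<lambda>\<alpha>. (\<Sum>i<n. of_nat (\<alpha> i) * (Y (Suc i) z * Y i z ^ (\<alpha> i - Suc 0)) * (\<Prod>j\<in>{..<Suc n}-{i}. Y j z ^ \<alpha> j))"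
  let ?C = "\<lambda>\<alpha>. of_nat (\<alpha> n) * Y n z ^ (\<alpha> n - 1) * (\<Prod>j\<in>{..<Suc n}-{n}. Y j z ^ \<alpha> j)"
  have sc_eq: "fpoly_eval (Suc n) (sc n c) (\<lambda>i. Y i z) z = (\<Sum>\<alpha>\<in>?S. c \<alpha> z * ?C \<alpha>)"
    using fpoly_eval_sc[OF fp, of n "\<lambda>i. Y i z" z] by (simp add: mult.assoc)
  have "(\<Sum>\<alpha>\<in>?S. ?A \<alpha> + c \<alpha> z *
        (\<Sum>i<Suc n. of_nat (\<alpha> i) * (Y (Suc i) z * Y i z ^ (\<alpha> i - Suc 0)) * (\<Prod>j\<in>{..<Suc n}-{i}. Y j z ^ \<alpha> j)))
     = (\<Sum>\<alpha>\<in>?S. (?A \<alpha> + c \<alpha> z * ?B \<alpha>) + (c \<alpha> z * ?C \<alpha>) * Y (Suc n) z)"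
    by (rule sum.cong) (auto simp: algebra_simps)
  also have "\<dots> = (\<Sum>\<alpha>\<in>?S. ?A \<alpha> + c \<alpha> z * ?B \<alpha>) + fpoly_eval (Suc n) (sc n c) (\<lambda>i. Y i z) z * Y (Suc n) z"
    unfolding sc_eq by (simp add: sum.distrib sum_distrib_right)
  finally show ?thesis using D by simp
qed


lemma rat_fun_ae_nz:
  assumes "rat_fun f" "f \<noteq> (\<lambda>_. 0)"
  shows "\<forall>\<^sub>\<approx>z. f z \<noteq> 0"
proof -
  obtain p q where pq: "q \<noteq> 0" "\<And>z. f z = poly p z / poly q z" using assms(1) unfolding rat_fun_def by blast
  have "p \<noteq> 0" using assms(2) pq by auto
  hence "finite ({z. poly p z = 0} \<union> {z. poly q z = 0})" using pq(1) by (simp add: poly_roots_finite)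
  hence "\<forall>\<^sub>\<approx>z. z \<notin> ({z. poly p z = 0} \<union> {z. poly q z = 0})" by (rule ae_finite)
  thus ?thesis by eventually_elim (simp add: pq)
qed

lemma fpoly_eval_mero:
  assumes "\<forall>\<alpha>. rat_fun (c \<alpha>)" "\<forall>i<N. X i meromorphic_on UNIV"
  shows "(\<lambda>z. fpoly_eval N c (\<lambda>i. X i z) z) meromorphic_on UNIV"
  unfolding fpoly_eval_def using assms rat_fun_mero
  by (intro meromorphic_intros) auto

lemma fpoly_eval_Rf:
  assumes "\<forall>\<alpha>. c \<alpha> \<noteq> (\<lambda>_. 0) \<longrightarrow> c \<alpha> \<in> Rf G" "\<forall>i<N. X i \<in> Rf G"
  shows "(\<lambda>z. fpoly_eval N c (\<lambda>i. X i z) z) \<in> Rf G"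
  unfolding fpoly_eval_def using assms
  by (intro Rf_sum Rf_mult Rf_prod Rf_power) auto

definition ann :: "(complex \<Rightarrow> complex) \<Rightarrow> nat \<Rightarrow> ((nat \<Rightarrow> nat) \<Rightarrow> complex \<Rightarrow> complex) \<Rightarrow> bool" where
  "ann h n c \<longleftrightarrow> fpoly (Suc n) c \<and> (\<forall>\<alpha>. rat_fun (c \<alpha>)) \<and> (\<exists>\<alpha>. c \<alpha> \<noteq> (\<lambda>_. 0)) \<and>
      (\<forall>\<^sub>\<approx>z. fpoly_eval (Suc n) c (\<lambda>i. (deriv ^^ i) h z) z = 0)"

lemma diff_alg_ann: "diff_alg h \<longleftrightarrow> (\<exists>n c. ann h n c)"
  by (simp add: diff_alg_def ann_def)

lemma ann_deg0:
  assumes a: "ann h n c" and d: "degb n c 0"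
  shows "n \<noteq> 0 \<and> ann h (n - 1) c"
proof -
  have fp: "fpoly (Suc n) c" and rf: "\<forall>\<alpha>. rat_fun (c \<alpha>)" and nz: "\<exists>\<alpha>. c \<alpha> \<noteq> (\<lambda>_. 0)"
    and ev: "\<forall>\<^sub>\<approx>z. fpoly_eval (Suc n) c (\<lambda>i. (deriv ^^ i) h z) z = 0"
    using a by (auto simp: ann_def)
  have van: "\<And>\<alpha> i. c \<alpha> \<noteq> (\<lambda>_. 0) \<Longrightarrow> i \<ge> n \<Longrightarrow> \<alpha> i = 0"
  proof -
    fix \<alpha> i assume "c \<alpha> \<noteq> (\<lambda>_. 0)" "i \<ge> n"
    thus "\<alpha> i = 0" using fp d unfolding fpoly_def degb_def
      by (cases "i = n") (auto simp: Suc_le_eq)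
  qed
  show ?thesis
  proof (cases n)
    case 0
    obtain \<alpha> where \<alpha>: "c \<alpha> \<noteq> (\<lambda>_. 0)" using nz by blast
    have a0: "\<alpha> = (\<lambda>_. 0)" using van[OF \<alpha>] 0 by auto
    have S: "{\<alpha>. c \<alpha> \<noteq> (\<lambda>_. 0)} = {(\<lambda>_. 0)}" using van 0 \<alpha> a0 by fastforce
    have "\<forall>\<^sub>\<approx>z. c (\<lambda>_. 0) z \<noteq> 0" using rat_fun_ae_nz[of "c (\<lambda>_. 0)"] rf \<alpha> a0 by auto
    moreover have "\<forall>\<^sub>\<approx>z. c (\<lambda>_. 0) z = 0" using ev by (simp add: fpoly_eval_def S 0)
    ultimately have "\<forall>\<^sub>\<approx>z::complex. False" by eventually_elim auto
    thus ?thesis using ae_not_bot by blast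
  next
    case (Suc m)
    have fp': "fpoly (Suc m) c" using fp van Suc unfolding fpoly_def by auto
    have eq: "fpoly_eval (Suc n) c X z = fpoly_eval (Suc m) c X z" for X z
      unfolding fpoly_eval_def
    proof (rule sum.cong[OF refl])
      fix \<alpha> assume "\<alpha> \<in> {\<alpha>. c \<alpha> \<noteq> (\<lambda>_. 0)}"
      hence "\<alpha> n = 0" using van by auto
      thus "c \<alpha> z * (\<Prod>i<Suc n. X i ^ \<alpha> i) = c \<alpha> z * (\<Prod>i<Suc m. X i ^ \<alpha> i)"
        using Suc by simp
    qed
    have ev': "\<forall>\<^sub>\<approx>z. fpoly_eval (Suc m) c (\<lambda>i. (deriv ^^ i) h z) z = 0" using ev unfolding eq .
    show ?thesis using fp' rf nz ev' Suc by (simp add: ann_def)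
  qed
qed

lemma diff_alg_good:
  assumes hm: "h meromorphic_on UNIV" and hd: "diff_alg h"
  shows "\<exists>G. good G \<and> h \<in> Rf G"
proof -
  define Y where "Y = (\<lambda>i. (deriv ^^ i) h)"
  have Ym: "Y i meromorphic_on UNIV" for i unfolding Y_def using hm by (rule meromorphic_on_higher_deriv)
  have YS: "Y (Suc i) = deriv (Y i)" for i by (simp add: Y_def)
  define n0 where "n0 = (LEAST n. \<exists>c. ann h n c)"
  have "\<exists>n c. ann h n c" using hd diff_alg_ann by blast
  hence ex0: "\<exists>c. ann h n0 c" unfolding n0_def by (rule LeastI_ex)
  have min0: "\<not> ann h n c" if "n < n0" for n c using that unfolding n0_def using not_less_Least by blast
  define d0 where "d0 = (LEAST d. \<exists>c. ann h n0 c \<and> degb n0 c d)"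
  have exd: "\<exists>d c. ann h n0 c \<and> degb n0 c d"
    using ex0 fpoly_degb unfolding ann_def by blast
  have "\<exists>c. ann h n0 c \<and> degb n0 c d0" unfolding d0_def using exd by (rule LeastI_ex)
  then obtain c where c: "ann h n0 c" "degb n0 c d0" by blast
  have mind: "\<not> (ann h n0 c' \<and> degb n0 c' d)" if "d < d0" for d c'
    using that unfolding d0_def using not_less_Least by blast
  have fp: "fpoly (Suc n0) c" and rf: "\<forall>\<alpha>. rat_fun (c \<alpha>)"
    and ev: "\<forall>\<^sub>\<approx>z. fpoly_eval (Suc n0) c (\<lambda>i. Y i z) z = 0"
    using c(1) by (auto simp: ann_def Y_def)
  have nd0: "\<not> degb n0 c 0"
  proof
    assume "degb n0 c 0"
    from ann_deg0[OF c(1) this] have "ann h (n0 - 1) c" "n0 \<noteq> 0" by auto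
    thus False using min0[of "n0 - 1" c] by auto
  qed
  have "d0 \<noteq> 0"
  proof
    assume "d0 = 0" thus False using c(2) nd0 by simp
  qed
  then obtain d1 where d1: "d0 = Suc d1" by (cases d0) auto
  from nd0 obtain \<alpha>0 where \<alpha>0: "c \<alpha>0 \<noteq> (\<lambda>_. 0)" "\<alpha>0 n0 \<noteq> 0" unfolding degb_def by auto
  define S where "S = (\<lambda>z. fpoly_eval (Suc n0) (sc n0 c) (\<lambda>i. Y i z) z)"
  have Sm: "S meromorphic_on UNIV" unfolding S_def
    by (rule fpoly_eval_mero) (use rat_fun_sc[OF rf] Ym in auto)
  have Snz: "\<forall>\<^sub>\<approx>z. S z \<noteq> 0"
  proof -
    have "\<not> (\<forall>\<^sub>\<approx>z. S z = 0)"
    proof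
      assume S0: "\<forall>\<^sub>\<approx>z. S z = 0"
      have "ann h n0 (sc n0 c)"
        unfolding ann_def
      proof (intro conjI)
        show "fpoly (Suc n0) (sc n0 c)" by (rule fpoly_sc[OF fp]) auto
        show "\<forall>\<alpha>. rat_fun (sc n0 c \<alpha>)" by (rule rat_fun_sc[OF rf])
        show "\<exists>\<alpha>. sc n0 c \<alpha> \<noteq> (\<lambda>_. 0)" using sc_nonzero[of c \<alpha>0 n0, OF \<alpha>0] by blast
        show "\<forall>\<^sub>\<approx>z. fpoly_eval (Suc n0) (sc n0 c) (\<lambda>i. (deriv ^^ i) h z) z = 0"
          using S0 by (simp add: S_def Y_def)
      qed
      moreover have "degb n0 (sc n0 c) d1" using c(2) d1 by (simp add: degb_sc)
      ultimately show False using mind[of d1 "sc n0 c"] d1 by auto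
    qed
    thus ?thesis using mero_dichotomy[OF Sm] by blast
  qed
  define G where "G = Y ` {..n0}"
  have finG: "finite G" by (simp add: G_def)
  have meroG: "mero_set G" by (auto simp: G_def mero_set_def Ym)
  have YG: "Y i \<in> Rf G" if "i \<le> n0" for i using that by (intro Rf_gen) (auto simp: G_def)
  have cR: "c \<alpha> \<in> Rf G" for \<alpha> using rf by (intro Rf_rat_fun) auto
  have dcR: "deriv (c \<alpha>) \<in> Rf G" for \<alpha>
  proof -
    have "deriv (c \<alpha>) \<in> Rf {}" using rf by (intro Rf_deriv Rf_rat_fun) (auto simp: mero_set_def)
    thus ?thesis by (rule Rf_mono) auto
  qed
  define T where "T = (\<lambda>z. \<Sum>\<alpha>\<in>{\<alpha>. c \<alpha> \<noteq> (\<lambda>_. 0)}. deriv (c \<alpha>) z * (\<Prod>i<Suc n0. Y i z ^ \<alpha> i) + c \<alpha> z *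
        (\<Sum>i<n0. of_nat (\<alpha> i) * (Y (Suc i) z * Y i z ^ (\<alpha> i - Suc 0)) * (\<Prod>j\<in>{..<Suc n0}-{i}. Y j z ^ \<alpha> j)))"
  have TR: "T \<in> Rf G" unfolding T_def
    by (intro Rf_sum Rf_add Rf_mult Rf_prod Rf_power Rf_const dcR cR YG) auto
  have SR: "S \<in> Rf G" unfolding S_def
    by (rule fpoly_eval_Rf) (use YG rat_fun_sc[OF rf] Rf_rat_fun in auto)
  have fin: "finite {\<alpha>. c \<alpha> \<noteq> (\<lambda>_. 0)}" using fp by (simp add: fpoly_def)
  have ev_dc: "\<forall>\<^sub>\<approx>z. \<forall>\<alpha>\<in>{\<alpha>. c \<alpha> \<noteq> (\<lambda>_. 0)}. (c \<alpha> has_field_derivative deriv (c \<alpha>) z) (at z)"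
    using fin rf by (subst eventually_ball_finite_distrib) (auto intro!: mero_ae_deriv rat_fun_mero)
  have ev_dY: "\<forall>\<^sub>\<approx>z. \<forall>i\<in>{..n0}. (Y i has_field_derivative Y (Suc i) z) (at z)"
    by (subst eventually_ball_finite_distrib) (auto simp: YS intro: mero_ae_deriv Ym)
  have ev_nhds: "\<forall>\<^sub>\<approx>z. eventually (\<lambda>w. fpoly_eval (Suc n0) c (\<lambda>i. Y i w) w = 0) (nhds z)"
    using ev by (rule ae_nhds)
  have "\<forall>\<^sub>\<approx>z. Y (Suc n0) z = - T z / S z"
    using ev_dc ev_dY ev_nhds Snz
  proof eventually_elim
    case (elim z)
    have D: "((\<lambda>w. fpoly_eval (Suc n0) c (\<lambda>i. Y i w) w) has_field_derivative T z + S z * Y (Suc n0) z) (at z)"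
      unfolding T_def S_def by (rule fpoly_eval_deriv[OF fp]) (use elim in auto)
    have "((\<lambda>w. fpoly_eval (Suc n0) c (\<lambda>i. Y i w) w) has_field_derivative 0) (at z)"
      by (subst DERIV_cong_ev[OF refl elim(3) refl]) simp
    from DERIV_unique[OF D this] have "T z + S z * Y (Suc n0) z = 0" .
    thus ?case using elim(4) by (simp add: field_simps add_eq_0_iff)
  qed
  hence YnR: "Y (Suc n0) \<in> Rf G"
    by (intro Rf_cong[OF Rf_divide[OF Rf_uminus[OF TR] SR meroG]]) (auto elim: eventually_mono)
  have dG: "\<forall>g\<in>G. deriv g \<in> Rf G"
  proof
    fix g assume "g \<in> G"
    then obtain i where i: "i \<le> n0" "g = Y i" by (auto simp: G_def)
    show "deriv g \<in> Rf G"
    proof (cases "i < n0")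
      case True thus ?thesis using i YG[of "Suc i"] by (simp add: YS)
    next
      case False hence "i = n0" using i by auto
      thus ?thesis using i YnR by (simp add: YS)
    qed
  qed
  have "good G" using finG meroG dG by (simp add: good_def)
  moreover have "h \<in> Rf G" using YG[of 0] by (simp add: Y_def)
  ultimately show ?thesis by blast
qed

definition Box :: "nat \<Rightarrow> nat \<Rightarrow> (nat \<Rightarrow> nat) set" where
  "Box r c = {\<gamma>. (\<forall>i<r. \<gamma> i \<le> c) \<and> (\<forall>i\<ge>r. \<gamma> i = 0)}"

lemma Box_Suc: "Box (Suc r) c = (\<lambda>(\<gamma>, t). \<gamma>(r := t)) ` (Box r c \<times> {..c})"
proof
  show "Box (Suc r) c \<subseteq> (\<lambda>(\<gamma>, t). \<gamma>(r := t)) ` (Box r c \<times> {..c})"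
  proof
    fix \<gamma> assume g: "\<gamma> \<in> Box (Suc r) c"
    have "\<gamma> = (\<lambda>(\<gamma>, t). \<gamma>(r := t)) (\<gamma>(r := 0), \<gamma> r)" by auto
    moreover have "(\<gamma>(r := 0), \<gamma> r) \<in> Box r c \<times> {..c}" using g by (auto simp: Box_def)
    ultimately show "\<gamma> \<in> (\<lambda>(\<gamma>, t). \<gamma>(r := t)) ` (Box r c \<times> {..c})" by blast
  qed
  show "(\<lambda>(\<gamma>, t). \<gamma>(r := t)) ` (Box r c \<times> {..c}) \<subseteq> Box (Suc r) c"
    by (auto simp: Box_def less_Suc_eq)
qed

lemma Box_inj: "inj_on (\<lambda>(\<gamma>, t). \<gamma>(r := t)) (Box r c \<times> {..c})"
proof (rule inj_onI, clarify)
  fix \<gamma> t \<gamma>' t' assume a: "\<gamma> \<in> Box r c" "\<gamma>' \<in> Box r c" "\<gamma>(r := t) = \<gamma>'(r := t')"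
  have "t = t'" using fun_cong[OF a(3), of r] by simp
  moreover have "\<gamma> = \<gamma>'"
  proof
    fix i show "\<gamma> i = \<gamma>' i"
      using fun_cong[OF a(3), of i] a(1,2) by (cases "i = r") (auto simp: Box_def)
  qed
  ultimately show "\<gamma> = \<gamma>' \<and> t = t'" by simp
qed

lemma Box_card: "finite (Box r c) \<and> card (Box r c) = (c + 1) ^ r"
proof (induction r)
  case 0
  have "Box 0 c = {(\<lambda>_. 0)}" by (auto simp: Box_def)
  thus ?case by simp
next
  case (Suc r)
  show ?case unfolding Box_Suc using Suc
    by (simp add: card_image[OF Box_inj] card_cartesian_product)
qed

definition fsc :: "complex \<Rightarrow> (complex \<Rightarrow> complex) \<Rightarrow> (complex \<Rightarrow> complex)" where
  "fsc a f = (\<lambda>z. a * f z)"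

interpretation FV: vector_space fsc
  by unfold_locales (auto simp: fsc_def fun_eq_iff algebra_simps)

lemma sum_fun_apply: "(\<Sum>v\<in>t. F v) z = (\<Sum>v\<in>t. F v z)"
  by (induction t rule: infinite_finite_induct) auto

definition mnm :: "(nat \<Rightarrow> complex \<Rightarrow> complex) \<Rightarrow> nat \<Rightarrow> nat \<times> (nat \<Rightarrow> nat) \<Rightarrow> complex \<Rightarrow> complex" where
  "mnm g r kg = (\<lambda>z. z ^ fst kg * (\<Prod>i<r. g i z ^ snd kg i))"

definition PC :: "(nat \<Rightarrow> complex \<Rightarrow> complex) \<Rightarrow> nat \<Rightarrow> nat \<Rightarrow> (complex \<Rightarrow> complex) set" where
  "PC g r c = FV.span (mnm g r ` ({..c} \<times> Box r c))"

lemma Mon_card: "finite (mnm g r ` ({..c} \<times> Box r c)) \<and> card (mnm g r ` ({..c} \<times> Box r c)) \<le> (c + 1) ^ Suc r"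
proof -
  have "card (mnm g r ` ({..c} \<times> Box r c)) \<le> card ({..c} \<times> Box r c)" by (rule card_image_le) (use Box_card in auto)
  also have "\<dots> = (c + 1) ^ Suc r" using Box_card[of r c] by (simp add: card_cartesian_product)
  finally show ?thesis using Box_card[of r c] by auto
qed

lemma PC_mono: "c \<le> c' \<Longrightarrow> PC g r c \<subseteq> PC g r c'"
  unfolding PC_def by (intro FV.span_mono image_mono) (auto simp: Box_def)

lemma PC_add: "f \<in> PC g r c \<Longrightarrow> h \<in> PC g r c \<Longrightarrow> (\<lambda>z. f z + h z) \<in> PC g r c"
  unfolding PC_def using FV.span_add[of f _ h] by (simp add: plus_fun_def)

lemma PC_scale: "f \<in> PC g r c \<Longrightarrow> (\<lambda>z. a * f z) \<in> PC g r c"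
  unfolding PC_def using FV.span_scale[of f _ a] by (simp add: fsc_def)

lemma PC_base: "k \<le> c \<Longrightarrow> \<gamma> \<in> Box r c \<Longrightarrow> mnm g r (k, \<gamma>) \<in> PC g r c"
  unfolding PC_def by (rule FV.span_base) auto

lemma mono_mult: "(\<lambda>z. mnm g r (k, \<gamma>) z * mnm g r (k', \<gamma>') z) = mnm g r (k + k', \<lambda>i. \<gamma> i + \<gamma>' i)"
  by (auto simp: mnm_def fun_eq_iff power_add prod.distrib algebra_simps)

lemma PC_mult_mono:
  assumes "m \<in> mnm g r ` ({..c1} \<times> Box r c1)" "h \<in> PC g r c2"
  shows "(\<lambda>z. m z * h z) \<in> PC g r (c1 + c2)"
proof -
  obtain k \<gamma> where m: "m = mnm g r (k, \<gamma>)" "k \<le> c1" "\<gamma> \<in> Box r c1" using assms(1) by auto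
  from assms(2) have "h \<in> FV.span (mnm g r ` ({..c2} \<times> Box r c2))" by (simp add: PC_def)
  thus ?thesis
  proof (induction rule: FV.span_induct_alt)
    case base
    show ?case using PC_scale[OF PC_base[of 0 "c1+c2" "\<lambda>_. 0" r g], of 0] by (simp add: Box_def)
  next
    case (step a x y)
    obtain k' \<gamma>' where x: "x = mnm g r (k', \<gamma>')" "k' \<le> c2" "\<gamma>' \<in> Box r c2" using step(1) by auto
    have le: "\<gamma> i \<le> c1" "\<gamma>' i \<le> c2" if "i < r" for i using m(3) x(3) that by (auto simp: Box_def)
    have "(\<lambda>i. \<gamma> i + \<gamma>' i) \<in> Box r (c1 + c2)"
      using m(3) x(3) le unfolding Box_def by (auto intro: add_mono)
    hence "(\<lambda>z. m z * x z) \<in> PC g r (c1 + c2)"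
      unfolding m(1) x(1) mono_mult by (intro PC_base) (use m x in auto)
    hence "(\<lambda>z. a * (m z * x z) + m z * y z) \<in> PC g r (c1 + c2)"
      by (intro PC_add PC_scale step(2))
    thus ?case by (simp add: fsc_def plus_fun_def algebra_simps)
  qed
qed

lemma PC_mult:
  assumes "f \<in> PC g r c1" "h \<in> PC g r c2"
  shows "(\<lambda>z. f z * h z) \<in> PC g r (c1 + c2)"
proof -
  from assms(1) have "f \<in> FV.span (mnm g r ` ({..c1} \<times> Box r c1))" by (simp add: PC_def)
  thus ?thesis
  proof (induction rule: FV.span_induct_alt)
    case base
    show ?case using PC_scale[OF PC_base[of 0 "c1+c2" "\<lambda>_. 0" r g], of 0] by (simp add: Box_def)
  next
    case (step a x y)
    have "(\<lambda>z. a * (x z * h z) + y z * h z) \<in> PC g r (c1 + c2)"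
      by (intro PC_add PC_scale step(2) PC_mult_mono[OF step(1) assms(2)])
    thus ?case by (simp add: fsc_def plus_fun_def algebra_simps)
  qed
qed

lemma PC_const: "(\<lambda>z. a) \<in> PC g r c"
  using PC_scale[OF PC_base[of 0 c "\<lambda>_. 0" r g], of a] by (simp add: Box_def mnm_def)

lemma PC_id: "c \<ge> 1 \<Longrightarrow> (\<lambda>z. z) \<in> PC g r c"
  using PC_base[of 1 c "\<lambda>_. 0" r g] by (simp add: Box_def mnm_def)

lemma PC_gen: "c \<ge> 1 \<Longrightarrow> i < r \<Longrightarrow> g i \<in> PC g r c"
proof -
  assume c: "c \<ge> 1" and i: "i < r"
  have "mnm g r (0, \<lambda>j. if j = i then 1 else 0) \<in> PC g r c"
    by (rule PC_base) (use c i in \<open>auto simp: Box_def\<close>)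
  moreover have "mnm g r (0, \<lambda>j. if j = i then 1 else 0) = g i"
  proof
    fix z
    have "(\<Prod>j<r. g j z ^ (if j = i then 1 else 0)) = (\<Prod>j<r. if j = i then g j z else 1)"
      by (rule prod.cong) auto
    also have "\<dots> = g i z" using i by (simp add: prod.delta)
    finally show "mnm g r (0, \<lambda>j. if j = i then 1 else 0) z = g i z" by (simp add: mnm_def)
  qed
  ultimately show ?thesis by simp
qed

lemma Pg_PC:
  assumes "G \<subseteq> g ` {..<r}"
  shows "f \<in> Pg G \<Longrightarrow> \<exists>c. f \<in> PC g r c"
proof (induction rule: Pg.induct)
  case (Pg_const a) thus ?case using PC_const by blast
next
  case Pg_id thus ?case using PC_id[of 1] by blast
next
  case (Pg_gen h)
  then obtain i where "i < r" "h = g i" using assms by auto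
  thus ?case using PC_gen[of 1 i r g] by blast
next
  case (Pg_add f h)
  then obtain c1 c2 where "f \<in> PC g r c1" "h \<in> PC g r c2" by blast
  hence "f \<in> PC g r (max c1 c2)" "h \<in> PC g r (max c1 c2)"
    using PC_mono[of c1 "max c1 c2" g r] PC_mono[of c2 "max c1 c2" g r] by auto
  thus ?case using PC_add by blast
next
  case (Pg_mult f h)
  then obtain c1 c2 where "f \<in> PC g r c1" "h \<in> PC g r c2" by blast
  thus ?case using PC_mult by blast
qed

lemma PC_prod:
  assumes "finite J" "\<And>j. j \<in> J \<Longrightarrow> f j \<in> PC g r (cc j)"
  shows "(\<lambda>z. \<Prod>j\<in>J. f j z) \<in> PC g r (\<Sum>j\<in>J. cc j)"
  using assms
proof (induction J rule: finite_induct)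
  case empty thus ?case using PC_const[of 1] by simp
next
  case (insert j J)
  thus ?case using PC_mult[of "f j" g r "cc j" "\<lambda>z. \<Prod>j\<in>J. f j z" "\<Sum>j\<in>J. cc j"] by simp
qed

lemma PC_power: "f \<in> PC g r c \<Longrightarrow> (\<lambda>z. f z ^ n) \<in> PC g r (n * c)"
  using PC_prod[of "{..<n}" "\<lambda>_. f" g r "\<lambda>_. c"] by simp

lemma lin_dep:
  assumes I: "finite I" and w: "\<And>i. i \<in> I \<Longrightarrow> w i \<in> FV.span M" and M: "finite M" and cI: "card M < card I"
  shows "\<exists>C. (\<exists>i\<in>I. C i \<noteq> 0) \<and> (\<forall>z. (\<Sum>i\<in>I. C i * w i z) = 0)"
proof (cases "inj_on w I")
  case True
  have cW: "card (w ` I) = card I" using True by (rule card_image)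
  have "\<not> FV.independent (w ` I)"
  proof
    assume "FV.independent (w ` I)"
    from FV.independent_span_bound[OF M this] w have "card (w ` I) \<le> card M" by auto
    thus False using cW cI by simp
  qed
  then obtain t u where tu: "finite t" "t \<subseteq> w ` I" "(\<Sum>v\<in>t. fsc (u v) v) = 0" "\<exists>v\<in>t. u v \<noteq> 0"
    unfolding FV.dependent_explicit by blast
  define C where "C = (\<lambda>i. if w i \<in> t then u (w i) else 0)"
  obtain v where v: "v \<in> t" "u v \<noteq> 0" using tu(4) by blast
  then obtain i0 where i0: "i0 \<in> I" "v = w i0" using tu(2) by auto
  have "C i0 \<noteq> 0" using v i0 by (simp add: C_def)
  moreover have "(\<Sum>i\<in>I. C i * w i z) = 0" for z
  proof -
    have "(\<Sum>i\<in>I. C i * w i z) = (\<Sum>i\<in>{i\<in>I. w i \<in> t}. u (w i) * w i z)"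
      unfolding C_def by (rule sum.mono_neutral_cong_right) (use I in auto)
    also have "\<dots> = (\<Sum>v\<in>w ` {i\<in>I. w i \<in> t}. u v * v z)"
      by (rule sum.reindex[symmetric, unfolded comp_def]) (rule inj_on_subset[OF True], auto)
    also have "w ` {i\<in>I. w i \<in> t} = t" using tu(2) by auto
    also have "(\<Sum>v\<in>t. u v * v z) = (\<Sum>v\<in>t. fsc (u v) v) z" by (simp add: sum_fun_apply fsc_def)
    also have "\<dots> = 0" using tu(3) by simp
    finally show ?thesis .
  qed
  ultimately show ?thesis using i0 by blast
next
  case False
  then obtain i1 i2 where i: "i1 \<in> I" "i2 \<in> I" "i1 \<noteq> i2" "w i1 = w i2" unfolding inj_on_def by blast
  define C where "C = (\<lambda>i. if i = i1 then 1 else if i = i2 then -1 else (0::complex))"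
  have "(\<Sum>i\<in>I. C i * w i z) = 0" for z
  proof -
    have "(\<Sum>i\<in>I. C i * w i z) = (\<Sum>i\<in>{i1, i2}. C i * w i z)"
      by (rule sum.mono_neutral_right) (use I i in \<open>auto simp: C_def\<close>)
    also have "\<dots> = 0" using i by (simp add: C_def)
    finally show ?thesis .
  qed
  moreover have "C i1 \<noteq> 0" by (simp add: C_def)
  ultimately show ?thesis using i by blast
qed

lemma finite_PC:
  assumes "finite F" "F \<subseteq> Pg G" "G \<subseteq> g ` {..<r}"
  shows "\<exists>c. \<forall>f\<in>F. f \<in> PC g r c"
  using assms(1,2)
proof (induction F rule: finite_induct)
  case empty thus ?case by auto
next
  case (insert f F)
  then obtain c where c: "\<forall>f\<in>F. f \<in> PC g r c" by auto
  obtain c' where c': "f \<in> PC g r c'" using Pg_PC[OF assms(3)] insert.prems by auto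
  have "\<forall>h\<in>insert f F. h \<in> PC g r (max c c')"
    using c c' PC_mono[of c "max c c'" g r] PC_mono[of c' "max c c'" g r] by auto
  thus ?case by blast
qed

lemma counting_ineq:
  fixes K r :: nat
  assumes K: "K \<ge> 1"
  defines "d \<equiv> K ^ Suc r"
  shows "(d * K + 1) ^ Suc r < (d + 1) ^ Suc (Suc r)"
proof -
  have "d * K + 1 \<le> K * (d + 1)" using K by (simp add: algebra_simps)
  hence "(d * K + 1) ^ Suc r \<le> (K * (d + 1)) ^ Suc r" by (rule power_mono) simp
  also have "\<dots> = d * (d + 1) ^ Suc r" by (simp only: power_mult_distrib d_def)
  also have "\<dots> < (d + 1) * (d + 1) ^ Suc r" by simp
  also have "\<dots> = (d + 1) ^ Suc (Suc r)" by simp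
  finally show ?thesis .
qed

lemma counting:
  assumes G: "finite G" and x: "\<And>j. j < Suc r \<Longrightarrow> x j \<in> Rf G" and r: "card G = r"
  shows "\<exists>d C. (\<exists>ka\<in>{..d} \<times> Box (Suc r) d. C ka \<noteq> 0) \<and>
     (\<forall>\<^sub>\<approx>z. (\<Sum>(k, \<alpha>)\<in>{..d} \<times> Box (Suc r) d. C (k, \<alpha>) * (z ^ k * (\<Prod>j<Suc r. x j z ^ \<alpha> j))) = 0)"
proof -
  obtain g where g: "bij_betw g {0..<r} G" using ex_bij_betw_nat_finite[OF G] r by blast
  hence Gg: "G \<subseteq> g ` {..<r}" by (auto simp: bij_betw_def atLeast0LessThan)
  have "\<forall>j. \<exists>p. j < Suc r \<longrightarrow> (fst p \<in> Pg G \<and> snd p \<in> Pg G \<and> (\<forall>\<^sub>\<approx>z. snd p z \<noteq> 0) \<and>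
      (\<forall>\<^sub>\<approx>z. x j z = fst p z / snd p z))"
  proof
    fix j show "\<exists>p. j < Suc r \<longrightarrow> (fst p \<in> Pg G \<and> snd p \<in> Pg G \<and> (\<forall>\<^sub>\<approx>z. snd p z \<noteq> 0) \<and>
      (\<forall>\<^sub>\<approx>z. x j z = fst p z / snd p z))"
    proof (cases "j < Suc r")
      case True
      obtain A B where "A \<in> Pg G" "B \<in> Pg G" "\<forall>\<^sub>\<approx>z. B z \<noteq> 0" "\<forall>\<^sub>\<approx>z. x j z = A z / B z"
        using x[OF True] by (rule RfE)
      thus ?thesis by (intro exI[of _ "(A, B)"]) auto
    qed auto
  qed
  from choice[OF this] obtain p where p0: "\<forall>j. j < Suc r \<longrightarrow> (fst (p j) \<in> Pg G \<and> snd (p j) \<in> Pg G \<and> (\<forall>\<^sub>\<approx>z. snd (p j) z \<noteq> 0) \<and>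
      (\<forall>\<^sub>\<approx>z. x j z = fst (p j) z / snd (p j) z))"
    by blast
  have p: "fst (p j) \<in> Pg G \<and> snd (p j) \<in> Pg G \<and> (\<forall>\<^sub>\<approx>z. snd (p j) z \<noteq> 0) \<and>
      (\<forall>\<^sub>\<approx>z. x j z = fst (p j) z / snd (p j) z)" if "j < Suc r" for j
    using p0 that by blast
  define A where "A j = fst (p j)" for j
  define B where "B j = snd (p j)" for j
  have AB: "A j \<in> Pg G" "B j \<in> Pg G" "\<forall>\<^sub>\<approx>z. B j z \<noteq> 0" "\<forall>\<^sub>\<approx>z. x j z = A j z / B j z" if "j < Suc r" for j
    using p[OF that] by (auto simp: A_def B_def)
  define Bc where "Bc = (\<lambda>z. \<Prod>j<Suc r. B j z)"
  define A' where "A' j = (\<lambda>z. A j z * (\<Prod>i\<in>{..<Suc r}-{j}. B i z))" for j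
  have BcP: "Bc \<in> Pg G" unfolding Bc_def by (rule Pg_prod) (use AB in auto)
  have A'P: "A' j \<in> Pg G" if "j < Suc r" for j
    unfolding A'_def by (intro Pg_mult Pg_prod) (use AB that in auto)
  have ev: "\<forall>\<^sub>\<approx>z. \<forall>j\<in>{..<Suc r}. B j z \<noteq> 0 \<and> x j z = A j z / B j z"
    by (subst eventually_ball_finite_distrib) (auto intro: eventually_conj AB)
  have ev2: "\<forall>\<^sub>\<approx>z. Bc z \<noteq> 0 \<and> (\<forall>j<Suc r. x j z = A' j z / Bc z)"
    using ev
  proof eventually_elim
    case (elim z)
    have "Bc z \<noteq> 0" using elim by (simp add: Bc_def)
    moreover have "x j z = A' j z / Bc z" if j: "j < Suc r" for j
    proof -
      have "Bc z = B j z * (\<Prod>i\<in>{..<Suc r}-{j}. B i z)" unfolding Bc_def using j by (subst prod.remove[of _ j]) auto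
      moreover have "(\<Prod>i\<in>{..<Suc r}-{j}. B i z) \<noteq> 0" using elim by auto
      ultimately show ?thesis using elim j by (simp add: A'_def)
    qed
    ultimately show ?case by auto
  qed
  obtain c0 where c0: "\<forall>f\<in>insert Bc (A' ` {..<Suc r}). f \<in> PC g r c0"
    using finite_PC[of "insert Bc (A' ` {..<Suc r})" G g r] BcP A'P Gg by auto
  define K where "K = 1 + Suc r * c0"
  define d where "d = K ^ Suc r"
  define E where "E = Suc r * d"
  define I where "I = {..d} \<times> Box (Suc r) d"
  define w where "w = (\<lambda>(k, \<alpha>). (\<lambda>z. z ^ k * (\<Prod>j<Suc r. A' j z ^ \<alpha> j) * Bc z ^ (E - (\<Sum>j<Suc r. \<alpha> j))))"
  define M where "M = mnm g r ` ({..d * K} \<times> Box r (d * K))"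
  have sumle: "(\<Sum>j<Suc r. \<alpha> j) \<le> E" if "\<alpha> \<in> Box (Suc r) d" for \<alpha>
  proof -
    have "(\<Sum>j<Suc r. \<alpha> j) \<le> of_nat (card {..<Suc r}) * d"
      by (rule sum_bounded_above) (use that in \<open>auto simp: Box_def\<close>)
    thus ?thesis by (simp add: E_def)
  qed
  have wPC: "w i \<in> FV.span M" if i: "i \<in> I" for i
  proof -
    obtain k \<alpha> where ka: "i = (k, \<alpha>)" "k \<le> d" "\<alpha> \<in> Box (Suc r) d" using i unfolding I_def by blast
    have z: "(\<lambda>z. z ^ k) \<in> PC g r (k * 1)" by (rule PC_power, rule PC_id) simp
    have A'c: "A' j \<in> PC g r c0" if "j < Suc r" for j using c0 that by blast
    have pr: "(\<lambda>z. \<Prod>j<Suc r. A' j z ^ \<alpha> j) \<in> PC g r (\<Sum>j<Suc r. \<alpha> j * c0)"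
      by (rule PC_prod) (simp_all add: PC_power A'c)
    have bc: "(\<lambda>z. Bc z ^ (E - (\<Sum>j<Suc r. \<alpha> j))) \<in> PC g r ((E - (\<Sum>j<Suc r. \<alpha> j)) * c0)"
      by (rule PC_power) (use c0 in blast)
    have wi: "w i = (\<lambda>z. z ^ k * (\<Prod>j<Suc r. A' j z ^ \<alpha> j) * Bc z ^ (E - (\<Sum>j<Suc r. \<alpha> j)))"
      unfolding ka w_def by simp
    have "w i \<in> PC g r (k * 1 + (\<Sum>j<Suc r. \<alpha> j * c0) + (E - (\<Sum>j<Suc r. \<alpha> j)) * c0)"
      unfolding wi by (rule PC_mult[OF PC_mult[OF z pr] bc])
    also have "k * 1 + (\<Sum>j<Suc r. \<alpha> j * c0) + (E - (\<Sum>j<Suc r. \<alpha> j)) * c0 = k + E * c0"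
    proof -
      have "(\<Sum>j<Suc r. \<alpha> j * c0) = (\<Sum>j<Suc r. \<alpha> j) * c0" by (rule sum_distrib_right[symmetric])
      moreover have "(\<Sum>j<Suc r. \<alpha> j) * c0 + (E - (\<Sum>j<Suc r. \<alpha> j)) * c0 = ((\<Sum>j<Suc r. \<alpha> j) + (E - (\<Sum>j<Suc r. \<alpha> j))) * c0"
        by (rule add_mult_distrib[symmetric])
      moreover have "(\<Sum>j<Suc r. \<alpha> j) + (E - (\<Sum>j<Suc r. \<alpha> j)) = E" using sumle[OF ka(3)] by simp
      ultimately show ?thesis by simp
    qed
    also have "PC g r (k + E * c0) \<subseteq> PC g r (d * K)"
    proof (rule PC_mono)
      have "E * c0 = d * (Suc r * c0)" by (simp add: E_def algebra_simps)
      moreover have "d * K = d + d * (Suc r * c0)" by (simp add: K_def distrib_left)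
      ultimately show "k + E * c0 \<le> d * K" using ka(2) by linarith
    qed
    finally show ?thesis by (simp add: PC_def M_def)
  qed
  have finI: "finite I" using Box_card[of "Suc r" d] by (simp add: I_def)
  have cardI: "card I = (d + 1) ^ Suc (Suc r)" using Box_card[of "Suc r" d] by (simp add: I_def card_cartesian_product)
  have finM: "finite M" and cardM: "card M \<le> (d * K + 1) ^ Suc r" using Mon_card[of g r "d * K"] by (auto simp: M_def)
  have K1: "K \<ge> 1" by (simp add: K_def)
  have ineq: "(d * K + 1) ^ Suc r < (d + 1) ^ Suc (Suc r)" using counting_ineq[OF K1] unfolding d_def .
  have cMI: "card M < card I" using cardM cardI ineq by linarith
  have "\<exists>C. (\<exists>i\<in>I. C i \<noteq> 0) \<and> (\<forall>z. (\<Sum>i\<in>I. C i * w i z) = 0)"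
    by (rule lin_dep[OF finI _ finM cMI]) (rule wPC)
  then obtain C where C0: "(\<exists>i\<in>I. C i \<noteq> 0) \<and> (\<forall>z. (\<Sum>i\<in>I. C i * w i z) = 0)"
    by (elim exE)
  hence C: "\<exists>i\<in>I. C i \<noteq> 0" "\<And>z. (\<Sum>i\<in>I. C i * w i z) = 0" by simp_all
  have "\<forall>\<^sub>\<approx>z. (\<Sum>(k, \<alpha>)\<in>I. C (k, \<alpha>) * (z ^ k * (\<Prod>j<Suc r. x j z ^ \<alpha> j))) = 0"
    using ev2
  proof eventually_elim
    case (elim z)
    have trm: "z ^ k * (\<Prod>j<Suc r. x j z ^ \<alpha> j) = w (k, \<alpha>) z / Bc z ^ E" if "(k, \<alpha>) \<in> I" for k \<alpha>
    proof -
      have s: "(\<Sum>j<Suc r. \<alpha> j) \<le> E" using that sumle by (auto simp: I_def)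
      have "(\<Prod>j<Suc r. x j z ^ \<alpha> j) = (\<Prod>j<Suc r. A' j z ^ \<alpha> j / Bc z ^ \<alpha> j)"
        using elim by (intro prod.cong) (auto simp: power_divide)
      also have "\<dots> = (\<Prod>j<Suc r. A' j z ^ \<alpha> j) / Bc z ^ (\<Sum>j<Suc r. \<alpha> j)"
        by (simp only: prod_dividef power_sum)
      also have "Bc z ^ E = Bc z ^ (\<Sum>j<Suc r. \<alpha> j) * Bc z ^ (E - (\<Sum>j<Suc r. \<alpha> j))"
        using s by (simp add: power_add[symmetric])
      hence "(\<Prod>j<Suc r. A' j z ^ \<alpha> j) / Bc z ^ (\<Sum>j<Suc r. \<alpha> j) =
             (\<Prod>j<Suc r. A' j z ^ \<alpha> j) * Bc z ^ (E - (\<Sum>j<Suc r. \<alpha> j)) / Bc z ^ E"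
        using elim by (simp add: field_simps)
      finally show ?thesis by (simp add: w_def mult.assoc)
    qed
    have "(\<Sum>(k, \<alpha>)\<in>I. C (k, \<alpha>) * (z ^ k * (\<Prod>j<Suc r. x j z ^ \<alpha> j))) = (\<Sum>(k, \<alpha>)\<in>I. C (k, \<alpha>) * (w (k, \<alpha>) z / Bc z ^ E))"
      by (rule sum.cong[OF refl], clarify, subst trm) auto
    also have "\<dots> = (\<Sum>i\<in>I. C i * w i z) / Bc z ^ E"
      by (simp add: sum_divide_distrib case_prod_unfold)
    also have "\<dots> = 0" using C(2) by simp
    finally show ?case .
  qed
  hence "(\<exists>ka\<in>{..d} \<times> Box (Suc r) d. C ka \<noteq> 0) \<and>
     (\<forall>\<^sub>\<approx>z. (\<Sum>(k, \<alpha>)\<in>{..d} \<times> Box (Suc r) d. C (k, \<alpha>) * (z ^ k * (\<Prod>j<Suc r. x j z ^ \<alpha> j))) = 0)"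
    using C(1) unfolding I_def by (intro conjI)
  thus ?thesis by (intro exI)
qed

lemma relation_diff_alg:
  assumes nz: "\<exists>ka\<in>{..d} \<times> Box (Suc r) d. C ka \<noteq> 0"
    and ev: "\<forall>\<^sub>\<approx>z. (\<Sum>(k, \<alpha>)\<in>{..d} \<times> Box (Suc r) d. C (k, \<alpha>) * (z ^ k * (\<Prod>j<Suc r. (deriv ^^ j) a z ^ \<alpha> j))) = 0"
  shows "diff_alg a"
proof -
  define B where "B = Box (Suc r) d"
  define p where "p \<alpha> = (if \<alpha> \<in> B then (\<Sum>k\<le>d. monom (C (k, \<alpha>)) k) else 0)" for \<alpha>
  define c where "c \<alpha> = (\<lambda>z. poly (p \<alpha>) z)" for \<alpha>
  have finB: "finite B" using Box_card by (simp add: B_def)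
  have cnz: "c \<alpha> \<noteq> (\<lambda>_. 0) \<longleftrightarrow> p \<alpha> \<noteq> 0" for \<alpha>
    using poly_all_0_iff_0[of "p \<alpha>"] by (auto simp: c_def fun_eq_iff)
  have suppB: "{\<alpha>. c \<alpha> \<noteq> (\<lambda>_. 0)} \<subseteq> B" using cnz by (auto simp: p_def)
  have fp: "fpoly (Suc r) c"
    unfolding fpoly_def
  proof
    show "finite {\<alpha>. c \<alpha> \<noteq> (\<lambda>_. 0)}" using finite_subset[OF suppB finB] .
    show "\<forall>\<alpha>. c \<alpha> \<noteq> (\<lambda>_. 0) \<longrightarrow> (\<forall>i\<ge>Suc r. \<alpha> i = 0)" using suppB by (auto simp: B_def Box_def)
  qed
  have rf: "\<forall>\<alpha>. rat_fun (c \<alpha>)"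
  proof
    fix \<alpha> show "rat_fun (c \<alpha>)" unfolding rat_fun_def c_def
      by (rule exI[of _ "p \<alpha>"], rule exI[of _ 1]) simp
  qed
  have nz': "\<exists>\<alpha>. c \<alpha> \<noteq> (\<lambda>_. 0)"
  proof -
    obtain k0 \<alpha>0 where ka: "k0 \<le> d" "\<alpha>0 \<in> B" "C (k0, \<alpha>0) \<noteq> 0" using nz by (auto simp: B_def)
    have "coeff (p \<alpha>0) k0 = C (k0, \<alpha>0)" using ka by (simp add: p_def coeff_sum)
    hence "p \<alpha>0 \<noteq> 0" using ka by auto
    thus ?thesis using cnz by blast
  qed
  have "\<forall>\<^sub>\<approx>z. fpoly_eval (Suc r) c (\<lambda>i. (deriv ^^ i) a z) z = 0"
    using ev
  proof eventually_elim
    case (elim z)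
    let ?Y = "\<lambda>\<alpha>. (\<Prod>j<Suc r. (deriv ^^ j) a z ^ \<alpha> j)"
    have "fpoly_eval (Suc r) c (\<lambda>i. (deriv ^^ i) a z) z = (\<Sum>\<alpha>\<in>B. c \<alpha> z * ?Y \<alpha>)"
      unfolding fpoly_eval_def
      by (rule sum.mono_neutral_left[OF finB suppB]) (auto simp: fun_eq_iff)
    also have "\<dots> = (\<Sum>\<alpha>\<in>B. \<Sum>k\<le>d. C (k, \<alpha>) * (z ^ k * ?Y \<alpha>))"
      by (rule sum.cong) (auto simp: c_def p_def poly_sum poly_monom sum_distrib_right mult.assoc)
    also have "\<dots> = (\<Sum>k\<le>d. \<Sum>\<alpha>\<in>B. C (k, \<alpha>) * (z ^ k * ?Y \<alpha>))" by (rule sum.swap)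
    also have "\<dots> = (\<Sum>(k, \<alpha>)\<in>{..d} \<times> B. C (k, \<alpha>) * (z ^ k * ?Y \<alpha>))" by (rule sum.cartesian_product)
    also have "\<dots> = 0" using elim by (simp add: B_def)
    finally show ?case .
  qed
  thus ?thesis unfolding diff_alg_def using fp rf nz' by blast
qed

lemma good_collect:
  assumes "finite F" "\<forall>f\<in>F. \<exists>G. good G \<and> f \<in> Rf G"
  shows "\<exists>G. good G \<and> (\<forall>f\<in>F. f \<in> Rf G)"
  using assms
proof (induction F rule: finite_induct)
  case empty thus ?case using good_empty by blast
next
  case (insert f F)
  then obtain G1 where G1: "good G1" "\<forall>f\<in>F. f \<in> Rf G1" by auto
  obtain G2 where G2: "good G2" "f \<in> Rf G2" using insert.prems by auto
  have "good (G1 \<union> G2)" using G1(1) G2(1) by (rule good_union)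
  moreover have "\<forall>h\<in>insert f F. h \<in> Rf (G1 \<union> G2)" using G1 G2 by (auto intro: Rf_mono)
  ultimately show ?case by blast
qed

theorem theorem2p8:
  fixes a b :: "complex \<Rightarrow> complex"
    and m n :: nat
    and e :: "nat \<Rightarrow> complex \<Rightarrow> complex"
    and P Q :: "(nat \<Rightarrow> nat) \<Rightarrow> (complex \<Rightarrow> complex)"
  assumes a_trans: "diff_trans a"
    and P_poly: "fpoly (m + n + 1) P" and P_coeffs: "\<forall>\<alpha>. P \<alpha> \<in> L_field"
    and Q_poly: "fpoly (m + n + 1) Q" and Q_coeffs: "\<forall>\<alpha>. Q \<alpha> \<in> L_field"
    and Q_nonzero: "\<exists>\<alpha>. \<not> (\<forall>\<^sub>\<approx>z. Q \<alpha> z = 0)"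
    and e_entire: "\<forall>i\<in>{1..m}. e i holomorphic_on UNIV"
    and e_alg: "\<forall>i\<in>{1..m}. diff_alg (e i)"
    and e_nonconst: "\<forall>i\<in>{1..m}. deriv (e i) \<noteq> (\<lambda>_. 0)"
    and b_mero: "b meromorphic_on UNIV"
    and eq: "\<forall>\<^sub>\<approx>z.
      (let X = (\<lambda>k. if k = 0 then b z
                    else if k \<le> m then b (e k z)
                    else (deriv ^^ (k - m)) b z)
       in fpoly_eval (m + n + 1) P X z / fpoly_eval (m + n + 1) Q X z) = a z"
  shows "diff_trans b"
proof (rule ccontr)
  assume "\<not> diff_trans b"
  hence b_alg: "diff_alg b" by (simp add: diff_trans_def)
  let ?N = "m + n + 1"
  define SP where "SP = {\<alpha>. P \<alpha> \<noteq> (\<lambda>_. 0)}"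
  define SQ where "SQ = {\<alpha>. Q \<alpha> \<noteq> (\<lambda>_. 0)}"
  define F where "F = P ` SP \<union> Q ` SQ \<union> {b} \<union> (\<lambda>i z. b (e i z)) ` {1..m}"
  have finF: "finite F" using P_poly Q_poly by (simp add: F_def SP_def SQ_def fpoly_def)
  have Lgood: "\<exists>G. good G \<and> f \<in> Rf G" if "f \<in> L_field" for f
    using that diff_alg_good by (auto simp: L_field_def)
  obtain Gb where Gb: "good Gb" "b \<in> Rf Gb" using diff_alg_good[OF b_mero b_alg] by blast
  have comp: "\<exists>G. good G \<and> (\<lambda>z. b (e i z)) \<in> Rf G" if i: "i \<in> {1..m}" for i
  proof -
    have enc: "entire_nc (e i)" using e_entire e_nonconst i by (simp add: entire_nc_def)
    have "e i meromorphic_on UNIV"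
      using entire_nc_analytic[OF enc] by (rule analytic_on_imp_meromorphic_on)
    then obtain Ge where Ge: "good Ge" "e i \<in> Rf Ge" using diff_alg_good e_alg i by blast
    show ?thesis by (rule compose_in_good[OF Gb Ge enc])
  qed
  have "\<forall>f\<in>F. \<exists>G. good G \<and> f \<in> Rf G"
    unfolding F_def using Lgood P_coeffs Q_coeffs Gb comp by blast
  then obtain G where G: "good G" "\<forall>f\<in>F. f \<in> Rf G" using good_collect[OF finF] by blast
  have mG: "mero_set G" and dG: "\<forall>g\<in>G. deriv g \<in> Rf G" and finG: "finite G" using G(1) by (auto simp: good_def)
  define Xf where "Xf k = (\<lambda>z. if k = 0 then b z else if k \<le> m then b (e k z) else (deriv ^^ (k - m)) b z)" for k
  have bG: "b \<in> Rf G" using G(2) by (auto simp: F_def)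
  have XR: "Xf k \<in> Rf G" for k
  proof (cases "k = 0")
    case True thus ?thesis using bG by (simp add: Xf_def)
  next
    case False
    show ?thesis
    proof (cases "k \<le> m")
      case True
      hence "(\<lambda>z. b (e k z)) \<in> Rf G" using G(2) False by (auto simp: F_def)
      thus ?thesis using True False by (simp add: Xf_def)
    next
      case False2: False
      have "(deriv ^^ (k - m)) b \<in> Rf G" by (rule Rf_higher_deriv[OF mG dG bG])
      thus ?thesis using False False2 by (simp add: Xf_def)
    qed
  qed
  have PR: "(\<lambda>z. fpoly_eval ?N P (\<lambda>k. Xf k z) z) \<in> Rf G"
    by (rule fpoly_eval_Rf) (use G(2) XR in \<open>auto simp: F_def SP_def\<close>)
  have QR: "(\<lambda>z. fpoly_eval ?N Q (\<lambda>k. Xf k z) z) \<in> Rf G"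
    by (rule fpoly_eval_Rf) (use G(2) XR in \<open>auto simp: F_def SQ_def\<close>)
  have aR: "a \<in> Rf G"
  proof (rule Rf_cong[OF Rf_divide[OF PR QR mG]])
    show "\<forall>\<^sub>\<approx>z. fpoly_eval ?N P (\<lambda>k. Xf k z) z / fpoly_eval ?N Q (\<lambda>k. Xf k z) z = a z"
      using eq by (simp add: Xf_def Let_def)
  qed
  have xR: "(deriv ^^ j) a \<in> Rf G" for j by (rule Rf_higher_deriv[OF mG dG aR])
  obtain d C where dC: "\<exists>ka\<in>{..d} \<times> Box (Suc (card G)) d. C ka \<noteq> 0"
    "\<forall>\<^sub>\<approx>z. (\<Sum>(k, \<alpha>)\<in>{..d} \<times> Box (Suc (card G)) d. C (k, \<alpha>) * (z ^ k * (\<Prod>j<Suc (card G). (deriv ^^ j) a z ^ \<alpha> j))) = 0"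
    using counting[OF finG, of "card G" "\<lambda>j. (deriv ^^ j) a"] xR by blast
  have "diff_alg a" by (rule relation_diff_alg[OF dC])
  thus False using a_trans by (simp add: diff_trans_def)
qed

end
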